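(* Let $s,t\ge1$ and $D\ge3$ be integers and let $\ell=2\lceil\log s/\log(D-1)\rceil+3$. Let $\mathcal G=\{G_1,\dots,G_t\}$ be an $s$-joined graph family on $n$ vertices. Let $\mathcal H$ be a $[t]$-edge-colored graph with $\Delta^{mon}(\mathcal H)\le D$ and $|V(\mathcal H)|\le n-6sD$, and let $\mathcal H_0\subseteq\mathcal H$ be a rooted $[t]$-edge-colored subgraph such that $\mathcal H$ is $\mathcal H_0$-path-constructible with all paths $P_1,\dots,P_k$ of length at least $\ell$. If $\phi:\mathcal H_0\hookrightarrow\mathcal G$ is a $(2s,D)$-good embedding, then there is a root set for $\mathcal H$ containing the roots of $\mathcal H_0$ that makes $\mathcal H$ a rooted graph, together with a $(2s,D)$-good embedding $\phi':\mathcal H\hookrightarrow\mathcal G$ extending $\phi$.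
   Context: A graph family $\mathcal G=\{G_1,\dots,G_t\}$ is a collection of $t$ simple graphs on a common finite vertex set $V$, $n=|V|$. For $X\subseteq V\times[t]$, $\Gamma_{\mathcal G}(X)=\bigcup_{(v,i)\in X}\{u\in V:uv\in E(G_i)\}$. The family is $s$-joined if for all $X\subseteq V\times[t]$ and $Y\subseteq V$ with $|X|\ge s$ and $|Y|\ge s$ there exist $(v,i)\in X$ and $y\in Y$ with $vy\in E(G_i)$. A $[t]$-edge-colored graph $\mathcal H$ is a simple graph with each edge colored in $[t]$; $H_i$ is its spanning subgraph of color-$i$ edges, $\deg_{H_i}(h)$ the number of color-$i$ edges at $h$, and $\Delta^{mon}(\mathcal H)=\max_i\max_h\deg_{H_i}(h)$. An embedding $\phi:\mathcal H\hookrightarrow\mathcal G$ is an injective map $V(\mathcal H)\to V$ with $\phi(x)\phi(y)\in E(G_i)$ for every edge $xy$ of color $i$. A rooted $[t]$-edge-colored graph is one with a distinguished set of roots such that, after deleting all edges with both ends roots, every connected component is a tree containing exactly one root; for a non-root $h$ the unique path from $h$ to the root set (meeting it only at its last vertex) determines the parent of $h$ (its neighbour on the path) and $c(h)$, the color of the edge from $h$ to its parent. For fixed $D$: $P_\phi(\mathcal H)=\{(\phi(h),c(h)):h\text{ non-root}\}$ and, for $X\subseteq V\times[t]$, $R(X,\phi)=|\Gamma_{\mathcal G}(X)\setminus\phi(V(\mathcal H))|-\sum_{(v,i)\in X}[D-\deg_{H_i}(\phi^{-1}(v))]-|P_\phi(\mathcal H)\cap X|$, with $\deg_{H_i}(\phi^{-1}(v))=0$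 if $v\notin\phi(V(\mathcal H))$. The embedding $\phi$ is $(s,D)$-good if $R(X,\phi)\ge0$ for every $X\subseteq V\times[t]$ with $|X|\le s$. For $\mathcal H_0\subseteq\mathcal H$, $\mathcal H$ is $\mathcal H_0$-path-constructible if there are edge-disjoint paths $P_1,\dots,P_k$ in $\mathcal H$ such that (i) $E(\mathcal H)=E(\mathcal H_0)\cup\bigcup_{j\in[k]}E(P_j)$; (ii) for each $i\in[k]$ the internal vertices of $P_i$ are disjoint from $V(\mathcal H_0)\cup\bigcup_{j<i}V(P_j)$; (iii) for each $i\in[k]$ at least one endpoint of $P_i$ lies in $V(\mathcal H_0)\cup\bigcup_{j<i}V(P_j)$. An embedding of $\mathcal H$ extends $\phi$ if it agrees with $\phi$ on $V(\mathcal H_0)$. *)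

theory Defs
  imports Complex_Main
begin

definition graph_family :: "'v set \<Rightarrow> nat \<Rightarrow> (nat \<Rightarrow> 'v \<Rightarrow> 'v \<Rightarrow> bool) \<Rightarrow> bool" where
  "graph_family V t G \<longleftrightarrow> finite V \<and>
     (\<forall>i\<in>{1..t}. \<forall>u w. G i u w \<longrightarrow> u \<in> V \<and> w \<in> V \<and> u \<noteq> w \<and> G i w u)"

definition Gamma :: "'v set \<Rightarrow> (nat \<Rightarrow> 'v \<Rightarrow> 'v \<Rightarrow> bool) \<Rightarrow> ('v \<times> nat) set \<Rightarrow> 'v set" where
  "Gamma V G X = {u \<in> V. \<exists>(w, i) \<in> X. G i w u}"

definition s_joined :: "'v set \<Rightarrow> nat \<Rightarrow> (nat \<Rightarrow> 'v \<Rightarrow> 'v \<Rightarrow> bool) \<Rightarrow> nat \<Rightarrow> bool" where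
  "s_joined V t G s \<longleftrightarrow>
     (\<forall>X Y. X \<subseteq> V \<times> {1..t} \<and> Y \<subseteq> V \<and> card X \<ge> s \<and> card Y \<ge> s \<longrightarrow>
        (\<exists>(w, i) \<in> X. \<exists>y \<in> Y. G i w y))"

definition colgraph :: "nat \<Rightarrow> 'h set \<Rightarrow> 'h set set \<Rightarrow> ('h set \<Rightarrow> nat) \<Rightarrow> bool" where
  "colgraph t VH EH col \<longleftrightarrow> finite VH \<and>
     (\<forall>e \<in> EH. \<exists>x y. e = {x, y} \<and> x \<noteq> y \<and> x \<in> VH \<and> y \<in> VH) \<and>
     (\<forall>e \<in> EH. col e \<in> {1..t})"

definition colsubgraph :: "'h set \<Rightarrow> 'h set set \<Rightarrow> 'h set \<Rightarrow> 'h set set \<Rightarrow> bool" where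
  "colsubgraph VH0 EH0 VH EH \<longleftrightarrow> VH0 \<subseteq> VH \<and> EH0 \<subseteq> EH"

definition degc :: "'h set set \<Rightarrow> ('h set \<Rightarrow> nat) \<Rightarrow> nat \<Rightarrow> 'h \<Rightarrow> nat" where
  "degc EH col i h = card {y. {h, y} \<in> EH \<and> col {h, y} = i}"

definition max_mon_deg_le :: "nat \<Rightarrow> 'h set \<Rightarrow> 'h set set \<Rightarrow> ('h set \<Rightarrow> nat) \<Rightarrow> nat \<Rightarrow> bool" where
  "max_mon_deg_le t VH EH col D \<longleftrightarrow> (\<forall>i \<in> {1..t}. \<forall>h \<in> VH. degc EH col i h \<le> D)"

definition is_path :: "'h set set \<Rightarrow> 'h list \<Rightarrow> bool" where
  "is_path E p \<longleftrightarrow> p \<noteq> [] \<and> distinct p \<and> (\<forall>j. Suc j < length p \<longrightarrow> {p ! j, p ! Suc j} \<in> E)"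

definition is_cycle :: "'h set set \<Rightarrow> 'h list \<Rightarrow> bool" where
  "is_cycle E c \<longleftrightarrow> length c \<ge> 3 \<and> is_path E c \<and> {last c, hd c} \<in> E"

definition reach :: "'h set set \<Rightarrow> 'h \<Rightarrow> 'h \<Rightarrow> bool" where
  "reach E x y \<longleftrightarrow> (x, y) \<in> {(a, b). {a, b} \<in> E}\<^sup>*"

definition rooted :: "'h set \<Rightarrow> 'h set set \<Rightarrow> 'h set \<Rightarrow> bool" where
  "rooted VH EH R \<longleftrightarrow> R \<subseteq> VH \<and>
     (let E' = {e \<in> EH. \<not> e \<subseteq> R} in
        (\<nexists>c. is_cycle E' c) \<and>
        (\<forall>x \<in> VH. card ({y. reach E' x y} \<inter> R) = 1))"

definition root_path :: "'h set set \<Rightarrow> 'h set \<Rightarrow> 'h \<Rightarrow> 'h list \<Rightarrow> bool" where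
  "root_path EH R h p \<longleftrightarrow> is_path EH p \<and> hd p = h \<and> last p \<in> R \<and>
     (\<forall>x \<in> set (butlast p). x \<notin> R)"

definition parent :: "'h set set \<Rightarrow> 'h set \<Rightarrow> 'h \<Rightarrow> 'h" where
  "parent EH R h = (THE p. root_path EH R h p) ! 1"

definition pcol :: "'h set set \<Rightarrow> ('h set \<Rightarrow> nat) \<Rightarrow> 'h set \<Rightarrow> 'h \<Rightarrow> nat" where
  "pcol EH col R h = col {h, parent EH R h}"

definition embedding ::
  "'v set \<Rightarrow> (nat \<Rightarrow> 'v \<Rightarrow> 'v \<Rightarrow> bool) \<Rightarrow> 'h set \<Rightarrow> 'h set set \<Rightarrow> ('h set \<Rightarrow> nat) \<Rightarrow> ('h \<Rightarrow> 'v) \<Rightarrow> bool" where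
  "embedding V G VH EH col \<phi> \<longleftrightarrow> inj_on \<phi> VH \<and> \<phi> ` VH \<subseteq> V \<and>
     (\<forall>x y. {x, y} \<in> EH \<longrightarrow> G (col {x, y}) (\<phi> x) (\<phi> y))"

definition degpre :: "'h set \<Rightarrow> 'h set set \<Rightarrow> ('h set \<Rightarrow> nat) \<Rightarrow> ('h \<Rightarrow> 'v) \<Rightarrow> 'v \<Rightarrow> nat \<Rightarrow> nat" where
  "degpre VH EH col \<phi> v i = (if v \<in> \<phi> ` VH then degc EH col i (inv_into VH \<phi> v) else 0)"

definition Pset :: "'h set \<Rightarrow> 'h set set \<Rightarrow> ('h set \<Rightarrow> nat) \<Rightarrow> 'h set \<Rightarrow> ('h \<Rightarrow> 'v) \<Rightarrow> ('v \<times> nat) set" where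
  "Pset VH EH col R \<phi> = (\<lambda>h. (\<phi> h, pcol EH col R h)) ` (VH - R)"

definition Rval ::
  "'v set \<Rightarrow> (nat \<Rightarrow> 'v \<Rightarrow> 'v \<Rightarrow> bool) \<Rightarrow> nat \<Rightarrow> 'h set \<Rightarrow> 'h set set \<Rightarrow> ('h set \<Rightarrow> nat) \<Rightarrow> 'h set
    \<Rightarrow> ('h \<Rightarrow> 'v) \<Rightarrow> ('v \<times> nat) set \<Rightarrow> int" where
  "Rval V G D VH EH col R \<phi> X =
     int (card (Gamma V G X - \<phi> ` VH))
     - (\<Sum>(v, i) \<in> X. int D - int (degpre VH EH col \<phi> v i))
     - int (card (Pset VH EH col R \<phi> \<inter> X))"

definition good ::
  "'v set \<Rightarrow> nat \<Rightarrow> (nat \<Rightarrow> 'v \<Rightarrow> 'v \<Rightarrow> bool) \<Rightarrow> nat \<Rightarrow> nat \<Rightarrow> 'h set \<Rightarrow> 'h set set \<Rightarrow> ('h set \<Rightarrow> nat)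
    \<Rightarrow> 'h set \<Rightarrow> ('h \<Rightarrow> 'v) \<Rightarrow> bool" where
  "good V t G s D VH EH col R \<phi> \<longleftrightarrow>
     (\<forall>X. X \<subseteq> V \<times> {1..t} \<and> card X \<le> s \<longrightarrow> Rval V G D VH EH col R \<phi> X \<ge> 0)"

definition path_edges :: "'h list \<Rightarrow> 'h set set" where
  "path_edges p = {{p ! j, p ! Suc j} | j. Suc j < length p}"

definition path_constructible ::
  "'h set \<Rightarrow> 'h set set \<Rightarrow> 'h set \<Rightarrow> 'h set set \<Rightarrow> 'h list list \<Rightarrow> bool" where
  "path_constructible VH0 EH0 VH EH Ps \<longleftrightarrow>
     (\<forall>p \<in> set Ps. is_path EH p) \<and>
     (\<forall>a < length Ps. \<forall>b < length Ps. a \<noteq> b \<longrightarrow> path_edges (Ps ! a) \<inter> path_edges (Ps ! b) = {}) \<and>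
     EH = EH0 \<union> \<Union> (path_edges ` set Ps) \<and>
     (\<forall>a < length Ps.
        set (butlast (tl (Ps ! a))) \<inter> (VH0 \<union> (\<Union>b<a. set (Ps ! b))) = {} \<and>
        (hd (Ps ! a) \<in> VH0 \<union> (\<Union>b<a. set (Ps ! b)) \<or>
         last (Ps ! a) \<in> VH0 \<union> (\<Union>b<a. set (Ps ! b))))"

end

theory Submission
  imports Defs
begin


locale absL =
  fixes V :: "'v set" and t :: nat and G :: "nat \<Rightarrow> 'v \<Rightarrow> 'v \<Rightarrow> bool" and s D n :: nat
  assumes gf: "graph_family V t G" and cardV: "card V = n" and sj: "s_joined V t G s"
    and s1: "s \<ge> 1" and D3: "D \<ge> 3"
begin

definition Phi :: "'v set \<Rightarrow> ('v \<times> nat \<Rightarrow> int) \<Rightarrow> ('v \<times> nat) set \<Rightarrow> int" where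
  "Phi J \<mu> X = int (card (Gamma V G X - J)) - (\<Sum>x\<in>X. \<mu> x)"

definition Good :: "'v set \<Rightarrow> ('v \<times> nat \<Rightarrow> int) \<Rightarrow> bool" where
  "Good J \<mu> \<longleftrightarrow> (\<forall>X. X \<subseteq> V \<times> {1..t} \<and> card X \<le> 2*s \<longrightarrow> 0 \<le> Phi J \<mu> X)"

definition N0 :: int where "N0 = int n - 2 * int s * int D - int s"

lemma finV: "finite V" using gf by (simp add: graph_family_def)

lemma Gamma_sub: "Gamma V G X \<subseteq> V" by (auto simp: Gamma_def)

lemma finGamma: "finite (Gamma V G X)" using Gamma_sub finV finite_subset by blast

lemma Gamma_Un: "Gamma V G (X \<union> Y) = Gamma V G X \<union> Gamma V G Y"
  by (auto simp: Gamma_def)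

lemma Gamma_Int: "Gamma V G (X \<inter> Y) \<subseteq> Gamma V G X \<inter> Gamma V G Y"
  by (auto simp: Gamma_def)

lemma Gamma_mono: "X \<subseteq> Y \<Longrightarrow> Gamma V G X \<subseteq> Gamma V G Y"
  by (auto simp: Gamma_def)

lemma Gamma_mem: "(q,i) \<in> X \<Longrightarrow> G i q v \<Longrightarrow> v \<in> V \<Longrightarrow> v \<in> Gamma V G X"
  by (auto simp: Gamma_def)

lemma Gamma_empty: "Gamma V G {} = {}" by (auto simp: Gamma_def)

lemma G_V: "i \<in> {1..t} \<Longrightarrow> G i u w \<Longrightarrow> u \<in> V \<and> w \<in> V \<and> u \<noteq> w \<and> G i w u"
  using gf unfolding graph_family_def by blast

lemma finX: "X \<subseteq> V \<times> {1..t} \<Longrightarrow> finite X"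
  using finV finite_subset by blast

lemma submod:
  assumes "finite X" "finite Y"
  shows "Phi J \<mu> (X \<union> Y) + Phi J \<mu> (X \<inter> Y) \<le> Phi J \<mu> X + Phi J \<mu> Y"
proof -
  let ?A = "Gamma V G X - J" and ?B = "Gamma V G Y - J"
  have fa: "finite ?A" "finite ?B" using finGamma by auto
  have u: "Gamma V G (X \<union> Y) - J = ?A \<union> ?B" by (auto simp: Gamma_Un)
  have i: "Gamma V G (X \<inter> Y) - J \<subseteq> ?A \<inter> ?B" using Gamma_Int by blast
  have ci: "card (Gamma V G (X \<inter> Y) - J) \<le> card (?A \<inter> ?B)"
    using i fa by (simp add: card_mono)
  have cu: "card (?A \<union> ?B) + card (?A \<inter> ?B) = card ?A + card ?B"
    using fa card_Un_Int by metis
  have s: "(\<Sum>x\<in>X \<union> Y. \<mu> x) + (\<Sum>x\<in>X \<inter> Y. \<mu> x) = (\<Sum>x\<in>X. \<mu> x) + (\<Sum>x\<in>Y. \<mu> x)"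
    using assms sum.union_inter by blast
  show ?thesis unfolding Phi_def u using ci cu s by linarith
qed

lemma large:
  assumes X: "X \<subseteq> V \<times> {1..t}" "s \<le> card X" "card X \<le> 2*s"
    and mu: "\<forall>x. \<mu> x \<le> int D" and J: "finite J" "int (card J) \<le> N0"
  shows "Phi J \<mu> X > 0"
proof -
  let ?Y = "V - Gamma V G X"
  have "card ?Y < s"
  proof (rule ccontr)
    assume "\<not> card ?Y < s"
    then have "card ?Y \<ge> s" by simp
    have "\<exists>(w, i) \<in> X. \<exists>y \<in> ?Y. G i w y"
      using sj X \<open>card ?Y \<ge> s\<close> unfolding s_joined_def by blast
    then obtain w i y where "(w,i) \<in> X" "y \<in> ?Y" "G i w y" by blast
    then show False by (auto simp: Gamma_def)
  qed
  have cV: "card V = card ?Y + card (Gamma V G X)"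
    using finV Gamma_sub card_Diff_subset[OF finGamma Gamma_sub] card_mono[OF finV Gamma_sub] by simp
  have cG: "card (Gamma V G X) \<le> card (Gamma V G X - J) + card J"
  proof -
    have "Gamma V G X \<subseteq> (Gamma V G X - J) \<union> J" by blast
    then have "card (Gamma V G X) \<le> card ((Gamma V G X - J) \<union> J)"
      using finGamma J(1) by (intro card_mono) auto
    also have "\<dots> \<le> card (Gamma V G X - J) + card J" by (rule card_Un_le)
    finally show ?thesis .
  qed
  have sm: "(\<Sum>x\<in>X. \<mu> x) \<le> (\<Sum>x\<in>X. int D)" using mu by (intro sum_mono) auto
  have "(\<Sum>x\<in>X. int D) = int (card X) * int D" by simp
  then have sm2: "(\<Sum>x\<in>X. \<mu> x) \<le> 2 * int s * int D"
  proof -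
    have "int (card X) * int D \<le> int (2*s) * int D" using X(3) by (intro mult_right_mono) auto
    then show ?thesis using sm \<open>(\<Sum>x\<in>X. int D) = int (card X) * int D\<close> by simp
  qed
  show ?thesis using cV cG sm2 J(2) cardV \<open>card ?Y < s\<close> unfolding Phi_def N0_def by linarith
qed


definition OK :: "'v set \<Rightarrow> ('v \<times> nat \<Rightarrow> int) \<Rightarrow> bool" where
  "OK J \<mu> \<longleftrightarrow> Good J \<mu> \<and> finite J \<and> int (card J) \<le> N0 \<and> (\<forall>x. \<mu> x \<le> int D)"

definition Fam :: "'v \<times> nat \<Rightarrow> 'v set \<Rightarrow> ('v \<times> nat \<Rightarrow> int) \<Rightarrow> ('v \<times> nat) set set" where
  "Fam z J \<mu> = {X. X \<subseteq> V \<times> {1..t} \<and> card X \<le> 2*s \<and> Phi J \<mu> X = 0 \<and> z \<notin> X}"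

lemma Phi_empty: "Phi J \<mu> {} = 0" by (simp add: Phi_def Gamma_empty)

lemma tight_small:
  assumes "OK J \<mu>" "X \<subseteq> V \<times> {1..t}" "card X \<le> 2*s" "Phi J \<mu> X = 0"
  shows "card X < s"
proof (rule ccontr)
  assume "\<not> card X < s"
  then have "s \<le> card X" by simp
  then have "Phi J \<mu> X > 0" using large[of X \<mu> J] assms unfolding OK_def by blast
  then show False using assms(4) by simp
qed

lemma fam_un:
  assumes "OK J \<mu>" "X \<in> Fam z J \<mu>" "Y \<in> Fam z J \<mu>"
  shows "X \<union> Y \<in> Fam z J \<mu>"
proof -
  have X: "X \<subseteq> V \<times> {1..t}" "card X \<le> 2*s" "Phi J \<mu> X = 0" "z \<notin> X"
    and Y: "Y \<subseteq> V \<times> {1..t}" "card Y \<le> 2*s" "Phi J \<mu> Y = 0" "z \<notin> Y"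
    using assms(2,3) by (auto simp: Fam_def)
  have cx: "card X < s" "card Y < s"
    using tight_small[OF assms(1) X(1,2,3)] tight_small[OF assms(1) Y(1,2,3)] by auto
  have fx: "finite X" "finite Y" using finX[OF X(1)] finX[OF Y(1)] by auto
  have cu: "card (X \<union> Y) \<le> 2*s" using card_Un_le[of X Y] cx by linarith
  have "card (X \<inter> Y) \<le> card X" using fx by (intro card_mono) auto
  then have ci: "card (X \<inter> Y) \<le> 2*s" using cx by linarith
  have g: "Good J \<mu>" using assms(1) by (simp add: OK_def)
  have su: "X \<union> Y \<subseteq> V \<times> {1..t}" "X \<inter> Y \<subseteq> V \<times> {1..t}" using X(1) Y(1) by auto
  have p1: "0 \<le> Phi J \<mu> (X \<union> Y)" using g cu su(1) unfolding Good_def by simp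
  have p2: "0 \<le> Phi J \<mu> (X \<inter> Y)" using g ci su(2) unfolding Good_def by simp
  have "Phi J \<mu> (X \<union> Y) = 0" using submod[OF fx, of J \<mu>] p1 p2 X(3) Y(3) by linarith
  then show ?thesis using su(1) X(4) Y(4) cu unfolding Fam_def by simp
qed

lemma fam_Union:
  assumes "OK J \<mu>"
  shows "\<Union>(Fam z J \<mu>) \<in> Fam z J \<mu>"
proof -
  have fin: "finite (Fam z J \<mu>)"
  proof -
    have "Fam z J \<mu> \<subseteq> Pow (V \<times> {1..t})" by (auto simp: Fam_def)
    moreover have "finite (Pow (V \<times> {1..t}))" using finV by simp
    ultimately show ?thesis using finite_subset by blast
  qed
  have "\<And>F. finite F \<Longrightarrow> F \<subseteq> Fam z J \<mu> \<Longrightarrow> \<Union>F \<in> Fam z J \<mu>"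
  proof -
    fix F :: "('v \<times> nat) set set"
    assume "finite F" "F \<subseteq> Fam z J \<mu>"
    then show "\<Union>F \<in> Fam z J \<mu>"
    proof (induction F rule: finite_induct)
      case empty then show ?case by (simp add: Fam_def Phi_empty)
    next
      case (insert X F)
      then show ?case using fam_un[OF assms, of X z "\<Union>F"] by auto
    qed
  qed
  then show ?thesis using fin by blast
qed

lemma Good_mono:
  assumes "Good J \<mu>" "\<And>x. \<mu>' x \<le> \<mu> x"
  shows "Good J \<mu>'"
  unfolding Good_def
proof (intro allI impI)
  fix X assume X: "X \<subseteq> V \<times> {1..t} \<and> card X \<le> 2*s"
  have "0 \<le> Phi J \<mu> X" using assms(1) X by (simp add: Good_def)
  moreover have "(\<Sum>x\<in>X. \<mu>' x) \<le> (\<Sum>x\<in>X. \<mu> x)" using assms(2) by (intro sum_mono) auto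
  ultimately show "0 \<le> Phi J \<mu>' X" unfolding Phi_def by linarith
qed

lemma safe:
  assumes ok: "OK J \<mu>" and q: "q \<in> V" "i \<in> {1..t}" and sl: "\<mu> (q,i) \<ge> 1"
  shows "\<exists>v. v \<in> V \<and> v \<notin> J \<and> G i q v \<and>
           Good (insert v J) (\<lambda>x. \<mu> x - (if x = (q,i) then 1 else 0))"
proof -
  define T where "T = \<Union>(Fam (q,i) J \<mu>)"
  have T: "T \<in> Fam (q,i) J \<mu>" using fam_Union[OF ok] by (simp add: T_def)
  have TT: "T \<subseteq> V \<times> {1..t}" "card T \<le> 2*s" "Phi J \<mu> T = 0" "(q,i) \<notin> T"
    using T unfolding Fam_def by simp_all
  have cT: "card T < s" using tight_small[OF ok TT(1,2,3)] .
  have fT: "finite T" using finX TT(1) by blast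
  define Y where "Y = insert (q,i) T"
  have Y1: "Y \<subseteq> V \<times> {1..t}" unfolding Y_def using TT(1) q by simp
  have "card Y \<le> Suc (card T)" unfolding Y_def using card_insert_le_m1 fT
    by (metis card_insert_if le_SucI order_refl)
  then have Y2: "card Y \<le> 2*s" using cT by linarith
  have g: "Good J \<mu>" using ok by (simp add: OK_def)
  have pY: "0 \<le> Phi J \<mu> Y" using g Y1 Y2 unfolding Good_def by simp
  define S where "S = Gamma V G {(q,i)} - J - Gamma V G T"
  have gy: "Gamma V G Y - J = (Gamma V G T - J) \<union> S"
    using Gamma_Un[of "{(q,i)}" T] by (auto simp: Y_def S_def)
  have fs: "finite S" "finite (Gamma V G T - J)" using finGamma by (auto simp: S_def)
  have cy: "card (Gamma V G Y - J) = card (Gamma V G T - J) + card S"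
    unfolding gy using fs by (intro card_Un_disjoint) (auto simp: S_def)
  have sy: "(\<Sum>x\<in>Y. \<mu> x) = \<mu> (q,i) + (\<Sum>x\<in>T. \<mu> x)" using fT TT(4) by (simp add: Y_def)
  have "int (card S) \<ge> \<mu> (q,i)" using pY TT(3) cy sy unfolding Phi_def by linarith
  then have "S \<noteq> {}" using sl by auto
  then obtain v where v: "v \<in> S" by blast
  have vV: "v \<in> V" "G i q v" "v \<notin> J" "v \<notin> Gamma V G T" using v by (auto simp: S_def Gamma_def)
  have "Good (insert v J) (\<lambda>x. \<mu> x - (if x = (q,i) then 1 else 0))"
    unfolding Good_def
  proof (intro allI impI)
    fix X assume X: "X \<subseteq> V \<times> {1..t} \<and> card X \<le> 2*s"
    have fX: "finite X" using finX X by simp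
    have p0: "0 \<le> Phi J \<mu> X" using g X unfolding Good_def by simp
    have sx: "(\<Sum>x\<in>X. \<mu> x - (if x = (q,i) then 1 else 0)) =
        (\<Sum>x\<in>X. \<mu> x) - (if (q,i) \<in> X then 1 else 0)"
      using fX by (simp add: sum_subtractf)
    have gx: "card (Gamma V G X - insert v J) + (if v \<in> Gamma V G X then 1 else 0) = card (Gamma V G X - J)"
    proof (cases "v \<in> Gamma V G X")
      case True
      have e: "Gamma V G X - J = insert v (Gamma V G X - insert v J)" using True vV by blast
      have nv: "v \<notin> Gamma V G X - insert v J" by blast
      have fin: "finite (Gamma V G X - insert v J)" using finGamma by blast
      have "card (Gamma V G X - J) = Suc (card (Gamma V G X - insert v J))"
        unfolding e using card_insert_disjoint[OF fin nv] .
      then show ?thesis using True by simp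
    next
      case False
      then have "Gamma V G X - insert v J = Gamma V G X - J" by blast
      then show ?thesis using False by simp
    qed
    show "0 \<le> Phi (insert v J) (\<lambda>x. \<mu> x - (if x = (q,i) then 1 else 0)) X"
    proof (cases "(q,i) \<in> X")
      case True
      then have "v \<in> Gamma V G X" using Gamma_mem vV by blast
      then show ?thesis using gx sx p0 True unfolding Phi_def by simp
    next
      case False
      show ?thesis
      proof (cases "Phi J \<mu> X = 0")
        case True
        then have "X \<in> Fam (q,i) J \<mu>" using X False unfolding Fam_def by simp
        then have "X \<subseteq> T" by (auto simp: T_def)
        then have "v \<notin> Gamma V G X" using Gamma_mono vV by blast
        then show ?thesis using gx sx p0 False unfolding Phi_def by simp
      next
        case False
        then have "1 \<le> Phi J \<mu> X" using p0 by simp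
        then show ?thesis using gx sx unfolding Phi_def by (simp split: if_splits)
      qed
    qed
  qed
  then show ?thesis using vV by blast
qed

lemma isolated:
  assumes ok: "OK J \<mu>" and room: "int (card J) + int s * int D < int n"
  shows "\<exists>v. v \<in> V \<and> v \<notin> J \<and> Good (insert v J) \<mu>"
proof -
  obtain q where q: "(q, 0::nat) \<notin> V \<times> {1..t}" by auto
  define T where "T = \<Union>(Fam (q,0) J \<mu>)"
  have T: "T \<in> Fam (q,0) J \<mu>" using fam_Union[OF ok] by (simp add: T_def)
  have TT: "T \<subseteq> V \<times> {1..t}" "card T \<le> 2*s" "Phi J \<mu> T = 0"
    using T unfolding Fam_def by simp_all
  have cT: "card T < s" using tight_small[OF ok TT(1,2,3)] .
  have fT: "finite T" using finX TT(1) by blast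
  have mu: "\<forall>x. \<mu> x \<le> int D" "finite J" using ok by (auto simp: OK_def)
  have "(\<Sum>x\<in>T. \<mu> x) \<le> (\<Sum>x\<in>T. int D)" using mu by (intro sum_mono) auto
  also have "\<dots> = int (card T) * int D" by simp
  also have "\<dots> \<le> int s * int D" using cT by (intro mult_right_mono) auto
  finally have "int (card (Gamma V G T - J)) \<le> int s * int D" using TT(3) unfolding Phi_def by linarith
  moreover have "card V \<le> card (V - J) + card J"
  proof -
    have "card V \<le> card ((V - J) \<union> J)" using finV mu(2) by (intro card_mono) auto
    also have "\<dots> \<le> card (V - J) + card J" by (rule card_Un_le)
    finally show ?thesis .
  qed
  ultimately have lt: "card (Gamma V G T - J) < card (V - J)" using room cardV by linarith
  have "\<not> (V - J \<subseteq> Gamma V G T - J)"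
  proof
    assume "V - J \<subseteq> Gamma V G T - J"
    then have "card (V - J) \<le> card (Gamma V G T - J)" using finGamma by (intro card_mono) auto
    then show False using lt by simp
  qed
  then obtain v where v: "v \<in> V - J" "v \<notin> Gamma V G T - J" by blast
  have vV: "v \<in> V" "v \<notin> J" "v \<notin> Gamma V G T" using v by auto
  have "Good (insert v J) \<mu>"
    unfolding Good_def
  proof (intro allI impI)
    fix X assume X: "X \<subseteq> V \<times> {1..t} \<and> card X \<le> 2*s"
    have p0: "0 \<le> Phi J \<mu> X" using ok X unfolding OK_def Good_def by simp
    have gx: "card (Gamma V G X - insert v J) + (if v \<in> Gamma V G X then 1 else 0) = card (Gamma V G X - J)"
    proof (cases "v \<in> Gamma V G X")
      case True
      have e: "Gamma V G X - J = insert v (Gamma V G X - insert v J)" using True vV by blast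
      have nv: "v \<notin> Gamma V G X - insert v J" by blast
      have fin: "finite (Gamma V G X - insert v J)" using finGamma by blast
      have "card (Gamma V G X - J) = Suc (card (Gamma V G X - insert v J))"
        unfolding e using card_insert_disjoint[OF fin nv] .
      then show ?thesis using True by simp
    next
      case False
      then have "Gamma V G X - insert v J = Gamma V G X - J" by blast
      then show ?thesis using False by simp
    qed
    show "0 \<le> Phi (insert v J) \<mu> X"
    proof (cases "Phi J \<mu> X = 0")
      case True
      have "(q,0) \<notin> X" using X q by blast
      then have "X \<in> Fam (q,0) J \<mu>" using X True unfolding Fam_def by simp
      then have "X \<subseteq> T" by (auto simp: T_def)
      then have "v \<notin> Gamma V G X" using Gamma_mono vV by blast
      then show ?thesis using gx p0 unfolding Phi_def by simp
    next
      case False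
      then have "1 \<le> Phi J \<mu> X" using p0 by simp
      then show ?thesis using gx unfolding Phi_def by (simp split: if_splits)
    qed
  qed
  then show ?thesis using vV by blast
qed


definition cnt :: "'v set \<Rightarrow> ('v \<Rightarrow> 'v \<times> nat) \<Rightarrow> 'v \<times> nat \<Rightarrow> int" where
  "cnt W pc x = int (card {w\<in>W. pc w = x})"

lemma cnt_nonneg: "cnt W pc x \<ge> 0" by (simp add: cnt_def)

lemma sum_cnt:
  assumes "finite X" "finite W"
  shows "(\<Sum>x\<in>X. cnt W pc x) = int (card {w\<in>W. pc w \<in> X})"
proof -
  have e: "{w\<in>W. pc w \<in> X} = (\<Union>x\<in>X. {w\<in>W. pc w = x})" by blast
  have "card (\<Union>x\<in>X. {w\<in>W. pc w = x}) = (\<Sum>x\<in>X. card {w\<in>W. pc w = x})"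
    using assms by (intro card_UN_disjoint) auto
  then show ?thesis unfolding e cnt_def by simp
qed

lemma prune:
  assumes g: "Good (J \<union> W) (\<lambda>x. \<mu> x - cnt W pc x)" and sub: "W' \<subseteq> W" and fW: "finite W"
    and dj: "J \<inter> W = {}" and pcG: "\<forall>w\<in>W. G (snd (pc w)) (fst (pc w)) w \<and> w \<in> V"
  shows "Good (J \<union> W') (\<lambda>x. \<mu> x - cnt W' pc x)"
  unfolding Good_def
proof (intro allI impI)
  fix X assume X: "X \<subseteq> V \<times> {1..t} \<and> card X \<le> 2*s"
  have fX: "finite X" using finX X by simp
  have fW': "finite W'" using fW sub finite_subset by blast
  have p0: "0 \<le> Phi (J \<union> W) (\<lambda>x. \<mu> x - cnt W pc x) X" using g X unfolding Good_def by simp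
  have s1: "(\<Sum>x\<in>X. \<mu> x - cnt W pc x) = (\<Sum>x\<in>X. \<mu> x) - int (card {w\<in>W. pc w \<in> X})"
    using sum_cnt[OF fX fW] by (simp add: sum_subtractf)
  have s2: "(\<Sum>x\<in>X. \<mu> x - cnt W' pc x) = (\<Sum>x\<in>X. \<mu> x) - int (card {w\<in>W'. pc w \<in> X})"
    using sum_cnt[OF fX fW'] by (simp add: sum_subtractf)
  define A where "A = {w\<in>W'. pc w \<in> X}"
  define B where "B = {w\<in>W - W'. pc w \<in> X}"
  have fAB: "finite A" "finite B" using fW fW' by (auto simp: A_def B_def)
  have eAB: "{w\<in>W. pc w \<in> X} = A \<union> B" using sub by (auto simp: A_def B_def)
  have cAB: "card {w\<in>W. pc w \<in> X} = card A + card B"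
    unfolding eAB using fAB by (intro card_Un_disjoint) (auto simp: A_def B_def)
  define C where "C = Gamma V G X - (J \<union> W)"
  have BG: "B \<subseteq> Gamma V G X"
  proof
    fix w assume "w \<in> B"
    then have w: "w \<in> W" "pc w \<in> X" by (auto simp: B_def)
    then have "(fst (pc w), snd (pc w)) \<in> X" by simp
    then show "w \<in> Gamma V G X" using Gamma_mem pcG w(1) by blast
  qed
  have CB: "C \<union> B \<subseteq> Gamma V G X - (J \<union> W')" using BG dj sub by (auto simp: C_def B_def)
  have fC: "finite C" using finGamma by (simp add: C_def)
  have "card C + card B = card (C \<union> B)"
    using fC fAB by (intro card_Un_disjoint[symmetric]) (auto simp: C_def B_def)
  also have "\<dots> \<le> card (Gamma V G X - (J \<union> W'))" using CB finGamma by (intro card_mono) auto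
  finally have "card C + card B \<le> card (Gamma V G X - (J \<union> W'))" .
  then show "0 \<le> Phi (J \<union> W') (\<lambda>x. \<mu> x - cnt W' pc x) X"
    using p0 s1 s2 cAB unfolding Phi_def C_def A_def by linarith
qed

definition TS :: "'v set \<Rightarrow> ('v \<times> nat \<Rightarrow> int) \<Rightarrow> 'v \<Rightarrow> 'v set \<Rightarrow> ('v \<Rightarrow> 'v \<times> nat) \<Rightarrow> bool" where
  "TS J \<mu> a W pc \<longleftrightarrow> finite W \<and> W \<subseteq> V \<and> W \<inter> J = {} \<and> Good (J \<union> W) (\<lambda>x. \<mu> x - cnt W pc x) \<and>
     (\<forall>w\<in>W. G (snd (pc w)) (fst (pc w)) w \<and> fst (pc w) \<in> insert a W \<and> snd (pc w) \<in> {1..t})"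

lemma cnt_insert:
  assumes "y \<notin> W" "finite W"
  shows "cnt (insert y W) (pc(y := p)) z = cnt W pc z + (if z = p then 1 else 0)"
proof -
  have e: "{w\<in>insert y W. (pc(y := p)) w = z} = (if p = z then insert y {w\<in>W. pc w = z} else {w\<in>W. pc w = z})"
    using assms(1) by auto
  have f: "finite {w\<in>W. pc w = z}" using assms(2) by simp
  have "y \<notin> {w\<in>W. pc w = z}" using assms(1) by simp
  then show ?thesis unfolding cnt_def e using f by auto
qed

lemma cnt_empty: "cnt {} pc z = 0" by (simp add: cnt_def)

lemma add1:
  assumes ts: "TS J \<mu> a W pc" and fJ: "finite J" and mu: "\<forall>x. \<mu> x \<le> int D"
    and x: "x \<in> insert a W" "x \<in> V" and c: "c \<in> {1..t}"
    and sl: "\<mu> (x,c) - cnt W pc (x,c) \<ge> 1"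
    and room: "int (card J) + int (card W) \<le> N0"
  shows "\<exists>y. y \<in> V \<and> y \<notin> J \<and> y \<notin> W \<and> G c x y \<and> TS J \<mu> a (insert y W) (pc(y := (x,c)))"
proof -
  have T: "finite W" "W \<subseteq> V" "W \<inter> J = {}" "Good (J \<union> W) (\<lambda>x. \<mu> x - cnt W pc x)"
     "\<forall>w\<in>W. G (snd (pc w)) (fst (pc w)) w \<and> fst (pc w) \<in> insert a W \<and> snd (pc w) \<in> {1..t}"
    using ts unfolding TS_def by simp_all
  have "card (J \<union> W) \<le> card J + card W" by (rule card_Un_le)
  then have ok: "OK (J \<union> W) (\<lambda>x. \<mu> x - cnt W pc x)"
    unfolding OK_def using T(1,4) fJ room mu cnt_nonneg
    by (smt (verit, ccfv_threshold) finite_UnI of_nat_add of_nat_mono)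
  obtain y where y: "y \<in> V" "y \<notin> J \<union> W" "G c x y"
    "Good (insert y (J \<union> W)) (\<lambda>z. \<mu> z - cnt W pc z - (if z = (x,c) then 1 else 0))"
    using safe[OF ok x(2) c] sl by auto
  have yW: "y \<notin> W" using y(2) by simp
  have ec: "(\<lambda>z. \<mu> z - cnt (insert y W) (pc(y := (x,c))) z) = (\<lambda>z. \<mu> z - cnt W pc z - (if z = (x,c) then 1 else 0))"
    using cnt_insert[OF yW T(1)] by (auto simp: algebra_simps)
  have eJ: "J \<union> insert y W = insert y (J \<union> W)" by simp
  have "TS J \<mu> a (insert y W) (pc(y := (x,c)))"
    unfolding TS_def
  proof (intro conjI)
    show "finite (insert y W)" using T(1) by simp
    show "insert y W \<subseteq> V" using T(2) y(1) by simp
    show "insert y W \<inter> J = {}" using T(3) y(2) by auto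
    show "Good (J \<union> insert y W) (\<lambda>z. \<mu> z - cnt (insert y W) (pc(y := (x, c))) z)"
      unfolding ec eJ using y(4) .
    show "\<forall>w\<in>insert y W. G (snd ((pc(y := (x, c))) w)) (fst ((pc(y := (x, c))) w)) w \<and>
        fst ((pc(y := (x, c))) w) \<in> insert a (insert y W) \<and> snd ((pc(y := (x, c))) w) \<in> {1..t}"
      using T(5) y(3) x(1) c yW by auto
  qed
  then show ?thesis using y yW by blast
qed


lemma TS_V: "TS J \<mu> a W pc \<Longrightarrow> W \<subseteq> V" by (simp add: TS_def)

lemma addlist:
  assumes "TS J \<mu> a W pc" "finite J" "\<forall>x. \<mu> x \<le> int D" "a \<in> V" "c \<in> {1..t}"
    "set ps \<subseteq> insert a W"
    "\<forall>x\<in>set ps. int (count_list ps x) \<le> \<mu> (x,c) - cnt W pc (x,c)"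
    "int (card J) + int (card W) + int (length ps) \<le> N0 + 1"
  shows "\<exists>ys pc'. length ys = length ps \<and> distinct ys \<and> set ys \<inter> (J \<union> W) = {} \<and>
           TS J \<mu> a (W \<union> set ys) pc' \<and> (\<forall>w\<in>W. pc' w = pc w) \<and>
           (\<forall>j<length ps. pc' (ys!j) = (ps!j, c))"
  using assms
proof (induction ps arbitrary: W pc)
  case Nil
  then show ?case by (intro exI[of _ "[]"] exI[of _ pc]) simp
next
  case (Cons p ps)
  have fW: "finite W" using Cons.prems(1) by (simp add: TS_def)
  have pV: "p \<in> insert a W" using Cons.prems(6) by simp
  have pV2: "p \<in> V" using pV Cons.prems(4) TS_V[OF Cons.prems(1)] by auto
  have sl: "\<mu> (p,c) - cnt W pc (p,c) \<ge> 1" using Cons.prems(7) by force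
  have room: "int (card J) + int (card W) \<le> N0" using Cons.prems(8) by simp
  obtain y where y: "y \<in> V" "y \<notin> J" "y \<notin> W" "G c p y" "TS J \<mu> a (insert y W) (pc(y := (p,c)))"
    using add1[OF Cons.prems(1,2,3) pV pV2 Cons.prems(5) sl room] by blast
  let ?W1 = "insert y W" and ?pc1 = "pc(y := (p,c))"
  have cn: "\<And>x. cnt ?W1 ?pc1 (x,c) = cnt W pc (x,c) + (if x = p then 1 else 0)"
    using cnt_insert[OF y(3) fW] by simp
  have h7: "\<forall>x\<in>set ps. int (count_list ps x) \<le> \<mu> (x,c) - cnt ?W1 ?pc1 (x,c)"
  proof
    fix x assume x: "x \<in> set ps"
    have "int (count_list (p#ps) x) \<le> \<mu> (x,c) - cnt W pc (x,c)" using Cons.prems(7) x by simp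
    then show "int (count_list ps x) \<le> \<mu> (x,c) - cnt ?W1 ?pc1 (x,c)" using cn[of x] by (simp split: if_splits)
  qed
  have h6: "set ps \<subseteq> insert a ?W1" using Cons.prems(6) by auto
  have h8: "int (card J) + int (card ?W1) + int (length ps) \<le> N0 + 1" using Cons.prems(8) y(3) fW by simp
  obtain ys pc' where ih: "length ys = length ps" "distinct ys" "set ys \<inter> (J \<union> ?W1) = {}"
      "TS J \<mu> a (?W1 \<union> set ys) pc'" "\<forall>w\<in>?W1. pc' w = ?pc1 w" "\<forall>j<length ps. pc' (ys!j) = (ps!j, c)"
    using Cons.IH[OF y(5) Cons.prems(2,3,4,5) h6 h7 h8] by blast
  show ?case
  proof (intro exI[of _ "y # ys"] exI[of _ pc'] conjI)
    show "length (y # ys) = length (p # ps)" using ih(1) by simp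
    show "distinct (y # ys)" using ih(2,3) by auto
    show "set (y # ys) \<inter> (J \<union> W) = {}" using ih(3) y(2,3) by auto
    show "TS J \<mu> a (W \<union> set (y # ys)) pc'" using ih(4) by (simp add: insert_commute)
    show "\<forall>w\<in>W. pc' w = pc w" using ih(5) y(3) by auto
    show "\<forall>j<length (p # ps). pc' ((y # ys) ! j) = ((p # ps) ! j, c)"
    proof (intro allI impI)
      fix j assume "j < length (p # ps)"
      then show "pc' ((y # ys) ! j) = ((p # ps) ! j, c)"
        using ih(5,6) by (cases j) auto
    qed
  qed
qed

definition qq :: nat where "qq = D - 1"
definition tsize :: "nat \<Rightarrow> nat" where "tsize m = (\<Sum>l\<le>m. qq ^ l)"

lemma count_rep: "distinct lfs \<Longrightarrow> count_list (concat (map (\<lambda>x. replicate k x) lfs)) y = (if y \<in> set lfs then k else 0)"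
proof (induction lfs)
  case Nil then show ?case by simp
next
  case (Cons a lfs)
  have "count_list (replicate k a) y = (if a = y then k else 0)" by (induction k) auto
  then show ?case using Cons by auto
qed

lemma len_rep: "length (concat (map (\<lambda>x. replicate k x) lfs)) = k * length lfs"
  by (induction lfs) auto

lemma set_rep: "set (concat (map (\<lambda>x. replicate k x) lfs)) \<subseteq> set lfs"
  by auto

lemma tree:
  assumes g: "Good J \<mu>" and fJ: "finite J" and JV: "J \<subseteq> V" and aJ: "a \<in> J"
    and mu: "\<forall>x. \<mu> x \<le> int D" and muD: "\<forall>v i. v \<notin> J \<longrightarrow> \<mu> (v,i) = int D"
    and sl: "\<mu> (a, cf 0) \<ge> 1"
  shows "(\<forall>l\<le>m. cf l \<in> {1..t}) \<Longrightarrow> int (card J) + int (tsize m) \<le> N0 + 1 \<Longrightarrow>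
    \<exists>W pc Lf. TS J \<mu> a W pc \<and> card W = tsize m \<and> Lf \<subseteq> W \<and> card Lf = qq^m \<and>
      (\<forall>x\<in>Lf. \<forall>i. cnt W pc (x,i) = 0) \<and>
      (\<forall>x\<in>Lf. \<exists>xs. length xs = Suc m \<and> last xs = x \<and> distinct xs \<and> set xs \<subseteq> W \<and>
          (\<forall>l<Suc m. pc (xs!l) = ((a#xs)!l, cf l)))"
proof (induction m)
  case 0
  have aV: "a \<in> V" using aJ JV by auto
  have ts0: "TS J \<mu> a {} pc0" for pc0 unfolding TS_def using g by (simp add: cnt_empty)
  have c0: "cf 0 \<in> {1..t}" using 0 by simp
  have r0: "int (card J) + int (card ({}::'v set)) + int (length [a]) \<le> N0 + 1"
    using 0 by (simp add: tsize_def)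
  obtain ys pc' where ys: "length ys = length [a]" "distinct ys" "set ys \<inter> (J \<union> {}) = {}"
      "TS J \<mu> a ({} \<union> set ys) pc'" "\<forall>j<length [a]. pc' (ys!j) = ([a]!j, cf 0)"
    using addlist[OF ts0 fJ mu aV c0, of "[a]"] r0 sl by (auto simp: cnt_empty)
  then obtain y where yy: "ys = [y]" by (cases ys) auto
  have py: "pc' y = (a, cf 0)" using ys(5) yy by auto
  have ya: "y \<noteq> a" using ys(3) yy aJ by auto
  show ?case
  proof (intro exI[of _ "{y}"] exI[of _ pc'] exI[of _ "{y}"] conjI)
    show "TS J \<mu> a {y} pc'" using ys(4) yy by simp
    show "card {y} = tsize 0" by (simp add: tsize_def)
    show "card {y} = qq ^ 0" by simp
    show "\<forall>x\<in>{y}. \<forall>i. cnt {y} pc' (x, i) = 0" using py ya by (auto simp: cnt_def)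
    show "\<forall>x\<in>{y}. \<exists>xs. length xs = Suc 0 \<and> last xs = x \<and> distinct xs \<and> set xs \<subseteq> {y} \<and>
          (\<forall>l<Suc 0. pc' (xs ! l) = ((a # xs) ! l, cf l))"
      using py by (intro ballI exI[of _ "[y]"]) auto
  qed simp
next
  case (Suc m)
  have ts_m: "tsize (Suc m) = tsize m + qq ^ Suc m" by (simp add: tsize_def)
  obtain W pc Lf where ih: "TS J \<mu> a W pc" "card W = tsize m" "Lf \<subseteq> W" "card Lf = qq^m"
      "\<forall>x\<in>Lf. \<forall>i. cnt W pc (x,i) = 0"
      "\<forall>x\<in>Lf. \<exists>xs. length xs = Suc m \<and> last xs = x \<and> distinct xs \<and> set xs \<subseteq> W \<and>
          (\<forall>l<Suc m. pc (xs!l) = ((a#xs)!l, cf l))"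
    using Suc.IH Suc.prems ts_m by force
  have fW: "finite W" "W \<subseteq> V" "W \<inter> J = {}" using ih(1) by (auto simp: TS_def)
  have fL: "finite Lf" using fW ih(3) finite_subset by blast
  obtain lfs where lfs: "set lfs = Lf" "distinct lfs" using finite_distinct_list[OF fL] by blast
  define ps where "ps = concat (map (\<lambda>x. replicate qq x) lfs)"
  define c where "c = cf (Suc m)"
  have c: "c \<in> {1..t}" using Suc.prems(1) by (simp add: c_def)
  have lps: "length ps = qq ^ Suc m"
    using len_rep[of qq lfs] lfs ih(4) distinct_card by (metis ps_def power_Suc)
  have sps: "set ps \<subseteq> Lf" using set_rep[of qq lfs] lfs(1) unfolding ps_def by simp
  have aV: "a \<in> V" using aJ JV by auto
  have h6: "set ps \<subseteq> insert a W" using sps ih(3) by auto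
  have h7: "\<forall>x\<in>set ps. int (count_list ps x) \<le> \<mu> (x,c) - cnt W pc (x,c)"
  proof
    fix x assume x: "x \<in> set ps"
    then have xL: "x \<in> Lf" using sps by auto
    then have "x \<notin> J" using ih(3) fW(3) by auto
    then have "\<mu> (x,c) = int D" using muD by simp
    moreover have "cnt W pc (x,c) = 0" using ih(5) xL by simp
    moreover have "count_list ps x = qq" using count_rep[OF lfs(2)] xL lfs(1) by (simp add: ps_def)
    ultimately show "int (count_list ps x) \<le> \<mu> (x,c) - cnt W pc (x,c)" by (simp add: qq_def)
  qed
  have h8: "int (card J) + int (card W) + int (length ps) \<le> N0 + 1"
    using Suc.prems(2) ih(2) lps ts_m by simp
  obtain ys pc' where ys: "length ys = length ps" "distinct ys" "set ys \<inter> (J \<union> W) = {}"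
      "TS J \<mu> a (W \<union> set ys) pc'" "\<forall>w\<in>W. pc' w = pc w" "\<forall>j<length ps. pc' (ys!j) = (ps!j, c)"
    using addlist[OF ih(1) fJ mu aV c h6 h7 h8] by blast
  show ?case
  proof -
    have f1: "TS J \<mu> a (W \<union> set ys) pc'" using ys(4) .
    have f2: "card (W \<union> set ys) = tsize (Suc m)"
    proof -
      have "card (W \<union> set ys) = card W + card (set ys)" using fW ys(3) by (intro card_Un_disjoint) auto
      then show ?thesis using ih(2) ys(1,2) lps ts_m distinct_card by metis
    qed
    have f3: "set ys \<subseteq> W \<union> set ys" by simp
    have f4: "card (set ys) = qq ^ Suc m" using ys(1,2) lps distinct_card by metis
    have f5: "\<forall>x\<in>set ys. \<forall>i. cnt (W \<union> set ys) pc' (x, i) = 0"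
    proof (intro ballI allI)
      fix x i assume x: "x \<in> set ys"
      have xn: "x \<notin> insert a W" using x ys(3) aJ by auto
      have "{w \<in> W \<union> set ys. pc' w = (x,i)} = {}"
      proof (rule ccontr)
        assume "{w \<in> W \<union> set ys. pc' w = (x,i)} \<noteq> {}"
        then obtain w where w: "w \<in> W \<union> set ys" "pc' w = (x,i)" by blast
        show False
        proof (cases "w \<in> W")
          case True
          then have "fst (pc w) \<in> insert a W" using ih(1) by (auto simp: TS_def)
          then show False using w(2) ys(5) True xn by auto
        next
          case False
          then obtain j where j: "j < length ys" "w = ys!j" using w(1) by (auto simp: in_set_conv_nth)
          then have "pc' w = (ps!j, c)" using ys(1,6) by simp
          moreover have "ps!j \<in> W" using j(1) ys(1) sps ih(3) nth_mem by (metis subsetD)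
          ultimately show False using w(2) xn by auto
        qed
      qed
      then show "cnt (W \<union> set ys) pc' (x, i) = 0" unfolding cnt_def by (metis card.empty of_nat_0)
    qed
    have f6: "\<forall>x\<in>set ys. \<exists>xs. length xs = Suc (Suc m) \<and> last xs = x \<and> distinct xs \<and> set xs \<subseteq> W \<union> set ys \<and>
          (\<forall>l<Suc (Suc m). pc' (xs ! l) = ((a # xs) ! l, cf l))"
    proof
      fix y assume y: "y \<in> set ys"
      then obtain j where j: "j < length ys" "y = ys!j" by (auto simp: in_set_conv_nth)
      define x where "x = ps!j"
      have xL: "x \<in> Lf" using j(1) ys(1) sps nth_mem unfolding x_def by (metis subsetD)
      have py: "pc' y = (x, c)" using ys(1,6) j unfolding x_def by simp
      obtain xs where xs: "length xs = Suc m" "last xs = x" "distinct xs" "set xs \<subseteq> W"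
          "\<forall>l<Suc m. pc (xs!l) = ((a#xs)!l, cf l)" using ih(6) xL by blast
      have yW: "y \<notin> W" using y ys(3) by auto
      show "\<exists>xs. length xs = Suc (Suc m) \<and> last xs = y \<and> distinct xs \<and> set xs \<subseteq> W \<union> set ys \<and>
          (\<forall>l<Suc (Suc m). pc' (xs ! l) = ((a # xs) ! l, cf l))"
      proof (intro exI[of _ "xs @ [y]"] conjI)
        show "length (xs @ [y]) = Suc (Suc m)" using xs(1) by simp
        show "last (xs @ [y]) = y" by simp
        show "distinct (xs @ [y])" using xs(3,4) yW by auto
        show "set (xs @ [y]) \<subseteq> W \<union> set ys" using xs(4) y by auto
        show "\<forall>l<Suc (Suc m). pc' ((xs @ [y]) ! l) = ((a # xs @ [y]) ! l, cf l)"
        proof (intro allI impI)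
          fix l assume l: "l < Suc (Suc m)"
          show "pc' ((xs @ [y]) ! l) = ((a # xs @ [y]) ! l, cf l)"
          proof (cases "l < Suc m")
            case True
            have e1: "(xs @ [y]) ! l = xs ! l" using True xs(1) by (simp add: nth_append)
            have e2: "(a # xs @ [y]) ! l = (a # xs) ! l"
              using True xs(1) by (metis append_Cons length_Cons less_SucI nth_append)
            have "xs ! l \<in> W" using True xs(1,4) nth_mem by (metis subsetD)
            then have "pc' (xs ! l) = pc (xs ! l)" using ys(5) by simp
            then show ?thesis using e1 e2 xs(5) True by simp
          next
            case False
            then have ll: "l = Suc m" using l by simp
            have e1: "(xs @ [y]) ! l = y" using ll xs(1) by (simp add: nth_append)
            have e2: "(a # xs @ [y]) ! l = xs ! m" using ll xs(1) by (simp add: nth_append)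
            have "xs ! m = x" using xs(1,2) by (metis diff_Suc_1 last_conv_nth list.size(3) nat.simps(3))
            then show ?thesis using e1 e2 py ll by (simp add: c_def)
          qed
        qed
      qed
    qed
    show ?thesis using f1 f2 f3 f4 f5 f6 by blast
  qed
qed

end



fun pinc :: "'v list \<Rightarrow> nat list \<Rightarrow> 'v \<times> nat \<Rightarrow> int" where
  "pinc (z1 # z2 # zs) (c # cs) x = (if x = (z1,c) then 1 else 0) + (if x = (z2,c) then 1 else 0) + pinc (z2 # zs) cs x"
| "pinc _ _ x = 0"

fun adjc :: "(nat \<Rightarrow> 'v \<Rightarrow> 'v \<Rightarrow> bool) \<Rightarrow> 'v list \<Rightarrow> nat list \<Rightarrow> bool" where
  "adjc G (z1 # z2 # zs) (c # cs) = (G c z1 z2 \<and> adjc G (z2 # zs) cs)"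
| "adjc G _ _ = True"

lemma pinc_nonneg: "pinc zs cs x \<ge> 0"
  by (induction zs cs x rule: pinc.induct) auto

lemma pinc_app:
  "length cs1 = length xs \<Longrightarrow> pinc (xs @ z # ys) (cs1 @ cs2) x = pinc (xs @ [z]) cs1 x + pinc (z # ys) cs2 x"
proof (induction xs arbitrary: cs1)
  case Nil then show ?case by simp
next
  case (Cons x1 xs)
  then obtain c cs1' where c: "cs1 = c # cs1'" "length cs1' = length xs" by (cases cs1) auto
  show ?case
  proof (cases xs)
    case Nil
    then show ?thesis using c by simp
  next
    case (Cons x2 xs')
    then show ?thesis using Cons.IH[OF c(2)] c by simp
  qed
qed

lemma adjc_app:
  "length cs1 = length xs \<Longrightarrow> adjc G (xs @ z # ys) (cs1 @ cs2) = (adjc G (xs @ [z]) cs1 \<and> adjc G (z # ys) cs2)"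
proof (induction xs arbitrary: cs1)
  case Nil then show ?case by simp
next
  case (Cons x1 xs)
  then obtain c cs1' where c: "cs1 = c # cs1'" "length cs1' = length xs" by (cases cs1) auto
  show ?case
  proof (cases xs)
    case Nil
    then show ?thesis using c by simp
  next
    case (Cons x2 xs')
    then show ?thesis using Cons.IH[OF c(2)] c by simp
  qed
qed

lemma pinc_rev:
  "length zs = Suc (length cs) \<Longrightarrow> pinc (rev zs) (rev cs) x = pinc zs cs x"
proof (induction cs arbitrary: zs)
  case Nil
  then obtain z where "zs = [z]" by (cases zs) auto
  then show ?case by simp
next
  case (Cons c cs)
  then obtain z1 z2 zs' where z: "zs = z1 # z2 # zs'" "length zs' = length cs"
  proof -
    obtain z1 r where "zs = z1 # r" using Cons.prems(1) by (cases zs) auto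
    moreover obtain z2 zs' where "r = z2 # zs'" using Cons.prems(1) calculation by (cases r) auto
    ultimately show ?thesis using that Cons.prems(1) by simp
  qed
  have "pinc (rev zs) (rev (c # cs)) x = pinc (rev zs' @ z2 # [z1]) (rev cs @ [c]) x"
    using z by simp
  also have "\<dots> = pinc (rev zs' @ [z2]) (rev cs) x + pinc [z2, z1] [c] x"
    using z by (intro pinc_app) simp
  also have "pinc (rev zs' @ [z2]) (rev cs) x = pinc (z2 # zs') cs x"
    using Cons.IH[of "z2 # zs'"] z by simp
  finally show ?case using z by simp
qed

lemma adjc_rev:
  "length zs = Suc (length cs) \<Longrightarrow> (\<forall>c\<in>set cs. \<forall>u w. G c u w \<longrightarrow> G c w u) \<Longrightarrow>
   adjc G (rev zs) (rev cs) = adjc G zs cs"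
proof (induction cs arbitrary: zs)
  case Nil
  then obtain z where "zs = [z]" by (cases zs) auto
  then show ?case by simp
next
  case (Cons c cs)
  obtain z1 r where zr: "zs = z1 # r" using Cons.prems(1) by (cases zs) auto
  obtain z2 zs' where r: "r = z2 # zs'" using Cons.prems(1) zr by (cases r) auto
  have z: "zs = z1 # z2 # zs'" "length zs' = length cs" using zr r Cons.prems(1) by auto
  have sy: "\<forall>c\<in>set cs. \<forall>u w. G c u w \<longrightarrow> G c w u" using Cons.prems(2) by simp
  have "adjc G (rev zs) (rev (c # cs)) = adjc G (rev zs' @ z2 # [z1]) (rev cs @ [c])"
    using z by simp
  also have "\<dots> = (adjc G (rev zs' @ [z2]) (rev cs) \<and> adjc G [z2, z1] [c])"
    using z by (intro adjc_app) simp
  also have "adjc G (rev zs' @ [z2]) (rev cs) = adjc G (z2 # zs') cs"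
    using Cons.IH[of "z2 # zs'", OF _ sy] z by simp
  finally have e: "adjc G (rev zs) (rev (c # cs)) = (adjc G (z2 # zs') cs \<and> G c z2 z1)" by simp
  have s2: "\<forall>u w. G c u w \<longrightarrow> G c w u" using Cons.prems(2) by simp
  have "G c z2 z1 = G c z1 z2" using s2 by blast
  then show ?case using e z by auto
qed

lemma chain_prefix:
  assumes "\<forall>l<length (xs @ [y]). pc ((xs @ [y])!l) = ((a # xs @ [y])!l, cf l)"
  shows "\<forall>l<length xs. pc (xs!l) = ((a # xs)!l, cf l)"
    "pc y = (last (a # xs), cf (length xs))"
proof -
  show "\<forall>l<length xs. pc (xs!l) = ((a # xs)!l, cf l)"
  proof (intro allI impI)
    fix l assume l: "l < length xs"
    have "pc ((xs @ [y])!l) = ((a # xs @ [y])!l, cf l)" using assms l by simp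
    moreover have "(xs @ [y])!l = xs!l" using l by (simp add: nth_append)
    moreover have "(a # xs @ [y])!l = (a # xs)!l"
    proof -
      have "(a # xs @ [y]) = (a # xs) @ [y]" by simp
      then show ?thesis using l by (simp only: nth_append) simp
    qed
    ultimately show "pc (xs!l) = ((a # xs)!l, cf l)" by simp
  qed
  have "length xs < length (xs @ [y])" by simp
  then have "pc ((xs @ [y])!length xs) = ((a # xs @ [y])!length xs, cf (length xs))" using assms by blast
  moreover have "(xs @ [y])!length xs = y" by simp
  ultimately have "pc y = ((a # xs @ [y])!length xs, cf (length xs))" by simp
  moreover have "(a # xs @ [y])!length xs = last (a # xs)"
  proof -
    have "(a # xs @ [y]) = (a # xs) @ [y]" by simp
    then have "(a # xs @ [y])!length xs = (a # xs)!length xs" by (simp only: nth_append) simp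
    also have "\<dots> = last (a # xs)" by (simp add: last_conv_nth)
    finally show ?thesis .
  qed
  ultimately show "pc y = (last (a # xs), cf (length xs))" by simp
qed

lemma butlast_snoc_eq: "a # xs @ [y] = butlast (a # xs) @ last (a # xs) # [y]"
proof -
  have e: "butlast (a#xs) @ [last (a#xs)] = a#xs" by (rule append_butlast_last_id) simp
  have "butlast (a # xs) @ last (a # xs) # [y] = (butlast (a#xs) @ [last(a#xs)]) @ [y]" by simp
  also have "\<dots> = (a#xs) @ [y]" using e by simp
  finally show ?thesis by simp
qed

lemma chain_pinc:
  "distinct xs \<Longrightarrow> \<forall>l<length xs. pc (xs!l) = ((a#xs)!l, cf l) \<Longrightarrow>
   int (card {w \<in> set xs. pc w = x}) \<le> pinc (a#xs) (map cf [0..<length xs]) x"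
proof (induction xs rule: rev_induct)
  case Nil then show ?case by simp
next
  case (snoc y xs)
  have ch: "\<forall>l<length xs. pc (xs!l) = ((a # xs)!l, cf l)" "pc y = (last (a # xs), cf (length xs))"
    using chain_prefix[OF snoc.prems(2)] by auto
  have d: "distinct xs" "y \<notin> set xs" using snoc.prems(1) by auto
  have ih: "int (card {w \<in> set xs. pc w = x}) \<le> pinc (a#xs) (map cf [0..<length xs]) x"
    using snoc.IH d(1) ch(1) by simp
  have cs: "map cf [0..<length (xs @ [y])] = map cf [0..<length xs] @ [cf (length xs)]" by simp
  have lb: "length (map cf [0..<length xs]) = length (butlast (a # xs))" by simp
  have "pinc (a # xs @ [y]) (map cf [0..<length xs] @ [cf (length xs)]) x =
      pinc (butlast (a # xs) @ [last (a # xs)]) (map cf [0..<length xs]) x +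
      pinc [last (a # xs), y] [cf (length xs)] x"
    unfolding butlast_snoc_eq[of a xs y] using pinc_app[OF lb] by simp
  also have "butlast (a # xs) @ [last (a # xs)] = a # xs" by simp
  finally have pe: "pinc (a # xs @ [y]) (map cf [0..<length (xs @ [y])]) x =
      pinc (a # xs) (map cf [0..<length xs]) x + pinc [last (a # xs), y] [cf (length xs)] x"
    using cs by simp
  have "{w \<in> set (xs @ [y]). pc w = x} = (if pc y = x then insert y {w \<in> set xs. pc w = x} else {w \<in> set xs. pc w = x})"
    by auto
  then have ce: "card {w \<in> set (xs @ [y]). pc w = x} = card {w \<in> set xs. pc w = x} + (if pc y = x then 1 else 0)"
    using d(2) by simp
  have p2: "pinc [last (a # xs), y] [cf (length xs)] x \<ge> (if pc y = x then 1 else 0)"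
    using ch(2) by simp
  have "int (card {w \<in> set (xs @ [y]). pc w = x}) = int (card {w \<in> set xs. pc w = x}) + (if pc y = x then 1 else 0)"
    using ce by simp
  then show ?case using pe ih p2 by linarith
qed

lemma chain_adjc:
  "\<forall>w \<in> set xs. G (snd (pc w)) (fst (pc w)) w \<Longrightarrow> \<forall>l<length xs. pc (xs!l) = ((a#xs)!l, cf l) \<Longrightarrow>
   adjc G (a#xs) (map cf [0..<length xs])"
proof (induction xs rule: rev_induct)
  case Nil then show ?case by simp
next
  case (snoc y xs)
  have ch: "\<forall>l<length xs. pc (xs!l) = ((a # xs)!l, cf l)" "pc y = (last (a # xs), cf (length xs))"
    using chain_prefix[OF snoc.prems(2)] by auto
  have ih: "adjc G (a#xs) (map cf [0..<length xs])" using snoc.IH snoc.prems(1) ch(1) by simp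
  have gy: "G (cf (length xs)) (last (a # xs)) y" using snoc.prems(1) ch(2) by force
  have cs: "map cf [0..<length (xs @ [y])] = map cf [0..<length xs] @ [cf (length xs)]" by simp
  have lb: "length (map cf [0..<length xs]) = length (butlast (a # xs))" by simp
  have "adjc G (a # xs @ [y]) (map cf [0..<length xs] @ [cf (length xs)]) =
      (adjc G (butlast (a # xs) @ [last (a # xs)]) (map cf [0..<length xs]) \<and>
      adjc G [last (a # xs), y] [cf (length xs)])"
    unfolding butlast_snoc_eq[of a xs y] using adjc_app[OF lb] by simp
  then show ?case using ih gy cs by simp
qed


lemma pinc_notin: "v \<notin> set zs \<Longrightarrow> pinc zs cs (v,i) = 0"
  by (induction zs cs "(v,i)" rule: pinc.induct) auto

lemma pinc_last: "distinct (zs @ [z]) \<Longrightarrow> length zs = length cs \<Longrightarrow> pinc (zs @ [z]) cs (z, c) \<le> 1"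
proof (induction zs arbitrary: cs)
  case Nil then show ?case by simp
next
  case (Cons z1 zs')
  then obtain c1 cs' where c: "cs = c1 # cs'" "length zs' = length cs'" by (cases cs) auto
  show ?case
  proof (cases zs')
    case Nil
    then show ?thesis using c Cons.prems(1) by simp
  next
    case (Cons z2 zs'')
    have ih: "pinc (zs' @ [z]) cs' (z, c) \<le> 1" using Cons.IH[OF _ c(2)] \<open>distinct ((z1 # zs') @ [z])\<close> by simp
    have "z \<noteq> z1" "z \<noteq> z2" using \<open>distinct ((z1 # zs') @ [z])\<close> Cons by auto
    then show ?thesis using ih c Cons by simp
  qed
qed

context absL
begin

lemma Gsym: "c \<in> {1..t} \<Longrightarrow> G c u w \<Longrightarrow> G c w u" using G_V by blast

lemma pathfree:
  "Good J \<mu> \<Longrightarrow> finite J \<Longrightarrow> J \<subseteq> V \<Longrightarrow> a \<in> J \<Longrightarrow> \<forall>x. \<mu> x \<le> int D \<Longrightarrow>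
   \<forall>v i. v \<notin> J \<longrightarrow> \<mu> (v,i) = int D \<Longrightarrow> set cs \<subseteq> {1..t} \<Longrightarrow>
   (cs \<noteq> [] \<longrightarrow> \<mu> (a, hd cs) \<ge> 1) \<Longrightarrow> int (card J) + int (length cs) \<le> N0 \<Longrightarrow>
   \<exists>vs. length vs = length cs \<and> distinct vs \<and> set vs \<inter> J = {} \<and> set vs \<subseteq> V \<and>
      adjc G (a#vs) cs \<and> Good (J \<union> set vs) (\<lambda>x. \<mu> x - pinc (a#vs) cs x)"
proof (induction cs arbitrary: J \<mu> a)
  case Nil
  then show ?case by (intro exI[of _ "[]"]) simp
next
  case (Cons c cs)
  have ok: "OK J \<mu>" unfolding OK_def using Cons.prems by simp
  have aV: "a \<in> V" using Cons.prems(3,4) by auto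
  have cT: "c \<in> {1..t}" using Cons.prems(7) by simp
  have sl: "\<mu> (a,c) \<ge> 1" using Cons.prems(8) by simp
  obtain v where v: "v \<in> V" "v \<notin> J" "G c a v"
      "Good (insert v J) (\<lambda>x. \<mu> x - (if x = (a,c) then 1 else 0))"
    using safe[OF ok aV cT sl] by blast
  define J' where "J' = insert v J"
  define \<mu>' where "\<mu>' = (\<lambda>x. \<mu> x - ((if x = (a,c) then 1 else 0) + (if x = (v,c) then 1 else 0)))"
  have g': "Good J' \<mu>'" unfolding J'_def \<mu>'_def by (rule Good_mono[OF v(4)]) simp
  have f': "finite J'" "J' \<subseteq> V" "v \<in> J'" using Cons.prems(2,3) v(1) by (auto simp: J'_def)
  have m1: "\<forall>x. \<mu>' x \<le> int D" using Cons.prems(5) unfolding \<mu>'_def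
    by (smt (verit))
  have av: "a \<noteq> v" using v(2) Cons.prems(4) by auto
  have m2: "\<forall>u i. u \<notin> J' \<longrightarrow> \<mu>' (u,i) = int D"
  proof (intro allI impI)
    fix u i assume u: "u \<notin> J'"
    then have "u \<noteq> a" "u \<noteq> v" "u \<notin> J" using Cons.prems(4) by (auto simp: J'_def)
    then show "\<mu>' (u,i) = int D" using Cons.prems(6) by (simp add: \<mu>'_def)
  qed
  have m3: "set cs \<subseteq> {1..t}" using Cons.prems(7) by simp
  have m4: "cs \<noteq> [] \<longrightarrow> \<mu>' (v, hd cs) \<ge> 1"
  proof
    assume "cs \<noteq> []"
    have "\<mu> (v, hd cs) = int D" using Cons.prems(6) v(2) by simp
    then show "\<mu>' (v, hd cs) \<ge> 1" using D3 av by (simp add: \<mu>'_def)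
  qed
  have m5: "int (card J') + int (length cs) \<le> N0" using Cons.prems(9) v(2) Cons.prems(2)
    by (simp add: J'_def)
  obtain vs where vs: "length vs = length cs" "distinct vs" "set vs \<inter> J' = {}" "set vs \<subseteq> V"
      "adjc G (v#vs) cs" "Good (J' \<union> set vs) (\<lambda>x. \<mu>' x - pinc (v#vs) cs x)"
    using Cons.IH[OF g' f'(1,2,3) m1 m2 m3 m4 m5] by blast
  show ?case
  proof (intro exI[of _ "v # vs"] conjI)
    show "length (v # vs) = length (c # cs)" using vs(1) by simp
    show "distinct (v # vs)" using vs(2,3) by (auto simp: J'_def)
    show "set (v # vs) \<inter> J = {}" using vs(3) v(2) by (auto simp: J'_def)
    show "set (v # vs) \<subseteq> V" using vs(4) v(1) by simp
    show "adjc G (a # v # vs) (c # cs)" using vs(5) v(3) by simp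
    have e1: "J' \<union> set vs = J \<union> set (v # vs)" by (auto simp: J'_def)
    have e2: "(\<lambda>x. \<mu>' x - pinc (v#vs) cs x) = (\<lambda>x. \<mu> x - pinc (a # v # vs) (c # cs) x)"
      by (auto simp: \<mu>'_def)
    show "Good (J \<union> set (v # vs)) (\<lambda>x. \<mu> x - pinc (a # v # vs) (c # cs) x)"
      using vs(6) unfolding e1 e2 .
  qed
qed

lemma cnt_zero: "\<forall>w\<in>W. fst (pc w) \<noteq> v \<Longrightarrow> cnt W pc (v,i) = 0"
proof -
  assume h: "\<forall>w\<in>W. fst (pc w) \<noteq> v"
  have "{w\<in>W. pc w = (v,i)} = {}" using h by auto
  then show ?thesis unfolding cnt_def by (metis card.empty of_nat_0)
qed

lemma tsize_ge1: "tsize m \<ge> 1" by (induction m) (auto simp: tsize_def)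

end


context absL
begin

lemma pathjoin:
  assumes g: "Good J \<mu>" and fJ: "finite J" and JV: "J \<subseteq> V" and aJ: "a \<in> J" and bJ: "b \<in> J"
    and ab: "a \<noteq> b" and mu: "\<forall>x. \<mu> x \<le> int D" and muD: "\<forall>v i. v \<notin> J \<longrightarrow> \<mu> (v,i) = int D"
    and cA: "set csA \<subseteq> {1..t}" and cj: "cj \<in> {1..t}" and cB: "set csB \<subseteq> {1..t}"
    and lA: "length csA = Suc m" and lB: "length csB = Suc m"
    and slA: "\<mu> (a, csA!0) \<ge> 1" and slB: "\<mu> (b, last csB) \<ge> 1"
    and sq: "s \<le> qq^m" and room: "int (card J) + 2 * int (tsize m) \<le> N0 + 1"
  shows "\<exists>vs. length vs = 2*m+2 \<and> distinct vs \<and> set vs \<inter> J = {} \<and> set vs \<subseteq> V \<and>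
           adjc G (a # vs @ [b]) (csA @ cj # csB) \<and>
           Good (J \<union> set vs) (\<lambda>x. \<mu> x - pinc (a # vs @ [b]) (csA @ cj # csB) x)"
proof -
  define cfA where "cfA = (\<lambda>l. csA!l)"
  define cfB where "cfB = (\<lambda>l. (rev csB)!l)"
  have rA: "\<forall>l\<le>m. cfA l \<in> {1..t}"
  proof (intro allI impI)
    fix l assume "l \<le> m"
    then have "l < length csA" using lA by simp
    then have "csA!l \<in> set csA" by (rule nth_mem)
    then show "cfA l \<in> {1..t}" using cA by (auto simp: cfA_def)
  qed
  have rB: "\<forall>l\<le>m. cfB l \<in> {1..t}"
  proof (intro allI impI)
    fix l assume "l \<le> m"
    then have "l < length (rev csB)" using lB by simp
    then have "(rev csB)!l \<in> set (rev csB)" by (rule nth_mem)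
    then show "cfB l \<in> {1..t}" using cB by (auto simp: cfB_def)
  qed
  have roomA: "int (card J) + int (tsize m) \<le> N0 + 1" using room by simp
  obtain WA pcA LfA where A: "TS J \<mu> a WA pcA" "card WA = tsize m" "LfA \<subseteq> WA" "card LfA = qq^m"
      "\<forall>x\<in>LfA. \<forall>i. cnt WA pcA (x,i) = 0"
      "\<forall>x\<in>LfA. \<exists>xs. length xs = Suc m \<and> last xs = x \<and> distinct xs \<and> set xs \<subseteq> WA \<and>
          (\<forall>l<Suc m. pcA (xs!l) = ((a#xs)!l, cfA l))"
    using tree[OF g fJ JV aJ mu muD, of cfA m] slA rA roomA by (auto simp: cfA_def)
  have TA: "finite WA" "WA \<subseteq> V" "WA \<inter> J = {}" "Good (J \<union> WA) (\<lambda>x. \<mu> x - cnt WA pcA x)"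
     "\<forall>w\<in>WA. G (snd (pcA w)) (fst (pcA w)) w \<and> fst (pcA w) \<in> insert a WA \<and> snd (pcA w) \<in> {1..t}"
    using A(1) unfolding TS_def by simp_all
  define J2 where "J2 = J \<union> WA"
  define \<mu>2 where "\<mu>2 = (\<lambda>x. \<mu> x - cnt WA pcA x)"
  have g2: "Good J2 \<mu>2" using TA(4) by (simp add: J2_def \<mu>2_def)
  have f2: "finite J2" "J2 \<subseteq> V" "b \<in> J2" using fJ TA(1,2) JV bJ by (auto simp: J2_def)
  have m2: "\<forall>x. \<mu>2 x \<le> int D" using mu cnt_nonneg unfolding \<mu>2_def by (smt (verit))
  have cz: "\<And>v i. v \<notin> insert a WA \<Longrightarrow> cnt WA pcA (v,i) = 0"
  proof -
    fix v i assume "v \<notin> insert a WA"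
    then have "\<forall>w\<in>WA. fst (pcA w) \<noteq> v" using TA(5) by auto
    then show "cnt WA pcA (v,i) = 0" by (rule cnt_zero)
  qed
  have mD2: "\<forall>v i. v \<notin> J2 \<longrightarrow> \<mu>2 (v,i) = int D"
  proof (intro allI impI)
    fix v i assume "v \<notin> J2"
    then have "v \<notin> insert a WA" "v \<notin> J" using aJ by (auto simp: J2_def)
    then show "\<mu>2 (v,i) = int D" using cz muD by (simp add: \<mu>2_def)
  qed
  have bnot: "b \<notin> insert a WA" using ab bJ TA(3) by auto
  have lastB: "last csB = (rev csB)!0" using lB by (metis hd_conv_nth hd_rev length_greater_0_conv rev_is_Nil_conv zero_less_Suc)
  have slB2: "\<mu>2 (b, cfB 0) \<ge> 1" using slB cz[OF bnot] lastB by (simp add: \<mu>2_def cfB_def)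
  have cJ2: "card J2 \<le> card J + card WA" unfolding J2_def by (rule card_Un_le)
  have roomB: "int (card J2) + int (tsize m) \<le> N0 + 1" using room cJ2 A(2) by linarith
  obtain WB pcB LfB where B: "TS J2 \<mu>2 b WB pcB" "card WB = tsize m" "LfB \<subseteq> WB" "card LfB = qq^m"
      "\<forall>x\<in>LfB. \<forall>i. cnt WB pcB (x,i) = 0"
      "\<forall>x\<in>LfB. \<exists>xs. length xs = Suc m \<and> last xs = x \<and> distinct xs \<and> set xs \<subseteq> WB \<and>
          (\<forall>l<Suc m. pcB (xs!l) = ((b#xs)!l, cfB l))"
    using tree[OF g2 f2(1,2,3) m2 mD2, of cfB m] slB2 rB roomB by blast
  have TB: "finite WB" "WB \<subseteq> V" "WB \<inter> J2 = {}" "Good (J2 \<union> WB) (\<lambda>x. \<mu>2 x - cnt WB pcB x)"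
     "\<forall>w\<in>WB. G (snd (pcB w)) (fst (pcB w)) w \<and> fst (pcB w) \<in> insert b WB \<and> snd (pcB w) \<in> {1..t}"
    using B(1) unfolding TS_def by simp_all
  have XV: "LfA \<times> {cj} \<subseteq> V \<times> {1..t}" using A(3) TA(2) cj by auto
  have cX: "card (LfA \<times> {cj}) = qq^m" using A(4) by (simp add: card_cartesian_product)
  have YV: "LfB \<subseteq> V" using B(3) TB(2) by auto
  have hh: "LfA \<times> {cj} \<subseteq> V \<times> {1..t} \<and> LfB \<subseteq> V \<and> card (LfA \<times> {cj}) \<ge> s \<and> card LfB \<ge> s"
    using XV YV cX B(4) sq by simp
  have "\<exists>(w, i) \<in> LfA \<times> {cj}. \<exists>y \<in> LfB. G i w y"
    using sj[unfolded s_joined_def, rule_format, OF hh] .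
  then obtain w i y where wiy: "(w,i) \<in> LfA \<times> {cj}" "y \<in> LfB" "G i w y" by blast
  then have ab2: "w \<in> LfA" "y \<in> LfB" "G cj w y" by auto
  define \<alpha> where "\<alpha> = w"
  define \<beta> where "\<beta> = y"
  have ab2: "\<alpha> \<in> LfA" "\<beta> \<in> LfB" "G cj \<alpha> \<beta>" using ab2 by (auto simp: \<alpha>_def \<beta>_def)
  obtain xsA where xA: "length xsA = Suc m" "last xsA = \<alpha>" "distinct xsA" "set xsA \<subseteq> WA"
      "\<forall>l<Suc m. pcA (xsA!l) = ((a#xsA)!l, cfA l)" using A(6) ab2(1) by blast
  obtain xsB where xB: "length xsB = Suc m" "last xsB = \<beta>" "distinct xsB" "set xsB \<subseteq> WB"
      "\<forall>l<Suc m. pcB (xsB!l) = ((b#xsB)!l, cfB l)" using B(6) ab2(2) by blast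
  define vs where "vs = xsA @ rev xsB"
  have dAB: "WA \<inter> WB = {}" using TB(3) by (auto simp: J2_def)
  have dJB: "WB \<inter> J = {}" using TB(3) by (auto simp: J2_def)
  define W where "W = WA \<union> WB"
  define pc where "pc = (\<lambda>w. if w \<in> WA then pcA w else pcB w)"
  have cntW: "\<And>x. cnt W pc x = cnt WA pcA x + cnt WB pcB x"
  proof -
    fix x
    have e: "{w\<in>W. pc w = x} = {w\<in>WA. pcA w = x} \<union> {w\<in>WB. pcB w = x}"
      using dAB by (auto simp: W_def pc_def)
    have "card {w\<in>W. pc w = x} = card {w\<in>WA. pcA w = x} + card {w\<in>WB. pcB w = x}"
      unfolding e using TA(1) TB(1) dAB by (intro card_Un_disjoint) auto
    then show "cnt W pc x = cnt WA pcA x + cnt WB pcB x" by (simp add: cnt_def)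
  qed
  have gW: "Good (J \<union> W) (\<lambda>x. \<mu> x - cnt W pc x)"
  proof -
    have "J2 \<union> WB = J \<union> W" by (auto simp: J2_def W_def)
    moreover have "(\<lambda>x. \<mu>2 x - cnt WB pcB x) = (\<lambda>x. \<mu> x - cnt W pc x)"
      using cntW by (auto simp: \<mu>2_def)
    ultimately show ?thesis using TB(4) by simp
  qed
  have svs: "set vs \<subseteq> W" using xA(4) xB(4) by (auto simp: vs_def W_def)
  have fW: "finite W" using TA(1) TB(1) by (simp add: W_def)
  have dJW: "J \<inter> W = {}" using TA(3) dJB by (auto simp: W_def)
  have pcG: "\<forall>w\<in>W. G (snd (pc w)) (fst (pc w)) w \<and> w \<in> V"
    using TA(5) TB(5) TA(2) TB(2) dAB by (auto simp: W_def pc_def)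
  have gvs: "Good (J \<union> set vs) (\<lambda>x. \<mu> x - cnt (set vs) pc x)"
    by (rule prune[OF gW svs fW dJW pcG])
  let ?cs = "csA @ cj # csB"
  define Y where "Y = rev (b # xsB)"
  obtain y1 Y' where Y: "Y = y1 # Y'" by (cases Y) (auto simp: Y_def)
  have y1: "y1 = \<beta>"
  proof -
    have "y1 = hd Y" using Y by simp
    also have "\<dots> = last (b # xsB)" by (simp add: Y_def hd_rev)
    also have "\<dots> = \<beta>" using xB(1,2) by (cases xsB) auto
    finally show ?thesis .
  qed
  have lastA: "last (a # xsA) = \<alpha>" using xA(1,2) by (cases xsA) auto
  have zs_eq: "a # vs @ [b] = butlast (a # xsA) @ \<alpha> # Y"
  proof -
    have "butlast (a # xsA) @ [\<alpha>] = a # xsA" using lastA by (metis append_butlast_last_id list.distinct(1))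
    then have "butlast (a # xsA) @ \<alpha> # Y = (a # xsA) @ Y" by (metis append.assoc append_Cons append_Nil)
    then show ?thesis by (simp add: vs_def Y_def)
  qed
  have lb: "length csA = length (butlast (a # xsA))" using lA xA(1) by (simp only: length_butlast length_Cons)
  have ab_a: "butlast (a # xsA) @ [\<alpha>] = a # xsA" using lastA by (metis append_butlast_last_id list.distinct(1))
  have mapA: "map cfA [0..<length xsA] = csA"
  proof -
    have e: "[0..<length xsA] = [0..<length csA]" using lA xA(1) by simp
    show ?thesis unfolding cfA_def e by (rule map_nth)
  qed
  have mapB: "map cfB [0..<length xsB] = rev csB"
  proof -
    have e: "[0..<length xsB] = [0..<length (rev csB)]" using lB xB(1) by simp
    show ?thesis unfolding cfB_def e by (rule map_nth)
  qed
  have lY: "length (b # xsB) = Suc (length (rev csB))" using lB xB(1) by simp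
  have pinc_eq: "\<And>x. pinc (a # vs @ [b]) ?cs x =
      pinc (a # xsA) csA x + ((if x = (\<alpha>, cj) then 1 else 0) + (if x = (y1, cj) then 1 else 0)) + pinc (b # xsB) (rev csB) x"
  proof -
    fix x
    have "pinc (a # vs @ [b]) ?cs x = pinc (butlast (a # xsA) @ [\<alpha>]) csA x + pinc (\<alpha> # Y) (cj # csB) x"
      unfolding zs_eq by (rule pinc_app[OF lb])
    also have "pinc (\<alpha> # Y) (cj # csB) x = (if x = (\<alpha>, cj) then 1 else 0) + (if x = (y1, cj) then 1 else 0) + pinc Y csB x"
      using Y by simp
    also have "pinc Y csB x = pinc (b # xsB) (rev csB) x"
      using pinc_rev[OF lY, of x] by (simp add: Y_def)
    finally show "pinc (a # vs @ [b]) ?cs x =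
      pinc (a # xsA) csA x + ((if x = (\<alpha>, cj) then 1 else 0) + (if x = (y1, cj) then 1 else 0)) + pinc (b # xsB) (rev csB) x"
      using ab_a by simp
  qed
  have cnt_bound: "\<And>x. cnt (set vs) pc x \<le> pinc (a # vs @ [b]) ?cs x"
  proof -
    fix x
    have e: "{w\<in>set vs. pc w = x} = {w\<in>set xsA. pcA w = x} \<union> {w\<in>set xsB. pcB w = x}"
      using xA(4) xB(4) dAB by (auto simp: vs_def pc_def)
    have "card {w\<in>set vs. pc w = x} = card {w\<in>set xsA. pcA w = x} + card {w\<in>set xsB. pcB w = x}"
      unfolding e using xA(4) xB(4) dAB by (intro card_Un_disjoint) auto
    then have ce: "int (card {w\<in>set vs. pc w = x}) = int (card {w\<in>set xsA. pcA w = x}) + int (card {w\<in>set xsB. pcB w = x})"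
      by simp
    have nn: "(0::int) \<le> (if x = (\<alpha>, cj) then 1 else 0) + (if x = (y1, cj) then 1 else 0)" by simp
    moreover have "int (card {w\<in>set xsA. pcA w = x}) \<le> pinc (a # xsA) csA x"
      using chain_pinc[OF xA(3), of pcA a cfA x] xA(1,5) mapA by simp
    moreover have "int (card {w\<in>set xsB. pcB w = x}) \<le> pinc (b # xsB) (rev csB) x"
      using chain_pinc[OF xB(3), of pcB b cfB x] xB(1,5) mapB by simp
    ultimately show "cnt (set vs) pc x \<le> pinc (a # vs @ [b]) ?cs x"
      unfolding cnt_def pinc_eq using ce by linarith
  qed
  have gfin: "Good (J \<union> set vs) (\<lambda>x. \<mu> x - pinc (a # vs @ [b]) ?cs x)"
    by (rule Good_mono[OF gvs]) (use cnt_bound in simp)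
  have adjA: "adjc G (a # xsA) csA"
  proof -
    have "\<forall>w\<in>set xsA. G (snd (pcA w)) (fst (pcA w)) w" using TA(5) xA(4) by auto
    then show ?thesis using chain_adjc[of xsA G pcA a cfA] xA(1,5) mapA by simp
  qed
  have adjB: "adjc G (b # xsB) (rev csB)"
  proof -
    have "\<forall>w\<in>set xsB. G (snd (pcB w)) (fst (pcB w)) w" using TB(5) xB(4) by auto
    then show ?thesis using chain_adjc[of xsB G pcB b cfB] xB(1,5) mapB by simp
  qed
  have symB: "\<forall>c\<in>set (rev csB). \<forall>u w. G c u w \<longrightarrow> G c w u" using cB Gsym by auto
  have adjY: "adjc G Y csB"
    using adjc_rev[OF lY symB] adjB by (simp add: Y_def)
  have adjall: "adjc G (a # vs @ [b]) ?cs"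
  proof -
    have "adjc G (a # vs @ [b]) ?cs = (adjc G (butlast (a # xsA) @ [\<alpha>]) csA \<and> adjc G (\<alpha> # Y) (cj # csB))"
      unfolding zs_eq by (rule adjc_app[OF lb])
    then show ?thesis using adjA adjY ab_a Y y1 ab2(3) by simp
  qed
  show ?thesis
  proof (intro exI[of _ vs] conjI)
    show "length vs = 2*m+2" using xA(1) xB(1) by (simp add: vs_def)
    show "distinct vs" using xA(3,4) xB(3,4) dAB by (auto simp: vs_def)
    show "set vs \<inter> J = {}" using svs dJW by auto
    show "set vs \<subseteq> V" using svs pcG by auto
    show "adjc G (a # vs @ [b]) ?cs" by (rule adjall)
    show "Good (J \<union> set vs) (\<lambda>x. \<mu> x - pinc (a # vs @ [b]) ?cs x)" by (rule gfin)
  qed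
qed


lemma joinfull:
  assumes g: "Good J \<mu>" and fJ: "finite J" and JV: "J \<subseteq> V" and aJ: "a \<in> J" and bJ: "b \<in> J"
    and ab: "a \<noteq> b" and mu: "\<forall>x. \<mu> x \<le> int D" and muD: "\<forall>v i. v \<notin> J \<longrightarrow> \<mu> (v,i) = int D"
    and cs: "set cs \<subseteq> {1..t}" and lc: "length cs = gg + (2*m+3)"
    and slA: "\<mu> (a, hd cs) \<ge> 1" and slB: "\<mu> (b, last cs) \<ge> 1"
    and sq: "s \<le> qq^m" and room: "int (card J) + int gg + 2 * int (tsize m) \<le> N0 + 1"
  shows "\<exists>vs. length vs = gg + (2*m+2) \<and> distinct vs \<and> set vs \<inter> J = {} \<and> set vs \<subseteq> V \<and>
           adjc G (a # vs @ [b]) cs \<and> Good (J \<union> set vs) (\<lambda>x. \<mu> x - pinc (a # vs @ [b]) cs x)"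
proof -
  define cs1 where "cs1 = take gg cs"
  define cs2 where "cs2 = drop gg cs"
  have lc1: "length cs1 = gg" and lc2: "length cs2 = 2*m+3" using lc by (auto simp: cs1_def cs2_def)
  have csplit: "cs = cs1 @ cs2" by (simp add: cs1_def cs2_def)
  have s1: "set cs1 \<subseteq> {1..t}" "set cs2 \<subseteq> {1..t}" using cs csplit by auto
  have hd1: "cs1 \<noteq> [] \<longrightarrow> \<mu> (a, hd cs1) \<ge> 1" using slA csplit by auto
  have t1: "tsize m \<ge> 1" by (rule tsize_ge1)
  have r1: "int (card J) + int (length cs1) \<le> N0" using room lc1 t1 by linarith
  obtain vs1 where v1: "length vs1 = length cs1" "distinct vs1" "set vs1 \<inter> J = {}" "set vs1 \<subseteq> V"
      "adjc G (a#vs1) cs1" "Good (J \<union> set vs1) (\<lambda>x. \<mu> x - pinc (a#vs1) cs1 x)"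
    using pathfree[OF g fJ JV aJ mu muD s1(1) hd1 r1] by blast
  define a' where "a' = last (a # vs1)"
  define J' where "J' = J \<union> set vs1"
  define \<mu>1 where "\<mu>1 = (\<lambda>x. \<mu> x - pinc (a#vs1) cs1 x)"
  define csA where "csA = take (Suc m) cs2"
  define cj where "cj = cs2 ! Suc m"
  define csB where "csB = drop (Suc (Suc m)) cs2"
  have c2split: "cs2 = csA @ cj # csB" unfolding csA_def cj_def csB_def
    using id_take_nth_drop[of "Suc m" cs2] lc2 by simp
  have lA: "length csA = Suc m" and lB: "length csB = Suc m" using lc2 by (auto simp: csA_def csB_def)
  have sA: "set csA \<subseteq> {1..t}" "cj \<in> {1..t}" "set csB \<subseteq> {1..t}" using s1(2) c2split by auto
  have g1: "Good J' \<mu>1" using v1(6) by (simp add: J'_def \<mu>1_def)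
  have f1: "finite J'" "J' \<subseteq> V" using fJ JV v1(4) by (auto simp: J'_def)
  have a'J: "a' \<in> J'" using aJ unfolding a'_def J'_def by (cases vs1) auto
  have bJ': "b \<in> J'" using bJ by (simp add: J'_def)
  have bv: "b \<notin> set vs1" using bJ v1(3) by auto
  have a'b: "a' \<noteq> b"
  proof -
    have "a' \<in> set (a # vs1)" unfolding a'_def by (rule last_in_set) simp
    then show ?thesis using ab bv by auto
  qed
  have m1: "\<forall>x. \<mu>1 x \<le> int D" using mu pinc_nonneg unfolding \<mu>1_def by (smt (verit))
  have mD1: "\<forall>v i. v \<notin> J' \<longrightarrow> \<mu>1 (v,i) = int D"
  proof (intro allI impI)
    fix v i assume v: "v \<notin> J'"
    then have vn: "v \<notin> set (a # vs1)" "v \<notin> J" using aJ by (auto simp: J'_def)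
    have "pinc (a#vs1) cs1 (v,i) = 0" using vn(1) by (rule pinc_notin)
    then show "\<mu>1 (v,i) = int D" using muD vn(2) by (simp add: \<mu>1_def)
  qed
  have csA0: "csA ! 0 = cs ! gg" using lc by (simp add: csA_def cs2_def)
  have slA1: "\<mu>1 (a', csA!0) \<ge> 1"
  proof (cases "vs1 = []")
    case True
    then have "gg = 0" using v1(1) lc1 by simp
    have "cs \<noteq> []" using lc by auto
    then have "csA ! 0 = hd cs" using csA0 \<open>gg = 0\<close> hd_conv_nth[of cs] by simp
    then show ?thesis using True slA by (simp add: a'_def \<mu>1_def)
  next
    case False
    then have a'v: "a' \<in> set vs1" unfolding a'_def by simp
    then have "a' \<notin> J" using v1(3) by auto
    then have muA: "\<mu> (a', csA!0) = int D" using muD by simp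
    have e: "a # vs1 = butlast (a # vs1) @ [a']" unfolding a'_def by simp
    have dd: "distinct (butlast (a # vs1) @ [a'])"
    proof -
      have "a \<notin> set vs1" using aJ v1(3) by auto
      then have "distinct (a # vs1)" using v1(2) by simp
      then show ?thesis unfolding e[symmetric] .
    qed
    have ll: "length (butlast (a # vs1)) = length cs1" using v1(1) by (simp only: length_butlast length_Cons diff_Suc_1)
    have "pinc (a # vs1) cs1 (a', csA!0) \<le> 1"
      using pinc_last[OF dd ll, of "csA!0"] e by simp
    then show ?thesis using muA D3 by (simp add: \<mu>1_def)
  qed
  have lastB: "last csB = last cs"
  proof -
    have "csB \<noteq> []" using lB by auto
    then show ?thesis using csplit c2split by simp
  qed
  have slB1: "\<mu>1 (b, last csB) \<ge> 1"
  proof -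
    have "b \<notin> set (a # vs1)" using ab bv by simp
    then have "pinc (a#vs1) cs1 (b, last csB) = 0" by (rule pinc_notin)
    then show ?thesis using slB lastB by (simp add: \<mu>1_def)
  qed
  have cJ': "card J' \<le> card J + length vs1" unfolding J'_def
    using card_Un_le[of J "set vs1"] distinct_card[OF v1(2)] by simp
  have room1: "int (card J') + 2 * int (tsize m) \<le> N0 + 1" using room cJ' v1(1) lc1 by linarith
  obtain vs2 where v2: "length vs2 = 2*m+2" "distinct vs2" "set vs2 \<inter> J' = {}" "set vs2 \<subseteq> V"
      "adjc G (a' # vs2 @ [b]) (csA @ cj # csB)"
      "Good (J' \<union> set vs2) (\<lambda>x. \<mu>1 x - pinc (a' # vs2 @ [b]) (csA @ cj # csB) x)"
    using pathjoin[OF g1 f1 a'J bJ' a'b m1 mD1 sA lA lB slA1 slB1 sq room1] by blast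
  define vs where "vs = vs1 @ vs2"
  have e: "butlast (a # vs1) @ [a'] = a # vs1" unfolding a'_def by simp
  have zs: "a # vs @ [b] = butlast (a # vs1) @ a' # (vs2 @ [b])"
  proof -
    have "butlast (a # vs1) @ a' # (vs2 @ [b]) = (butlast (a # vs1) @ [a']) @ (vs2 @ [b])" by simp
    also have "\<dots> = (a # vs1) @ vs2 @ [b]" using e by simp
    finally show ?thesis by (simp add: vs_def)
  qed
  have ll: "length cs1 = length (butlast (a # vs1))" using v1(1) by (simp only: length_butlast length_Cons diff_Suc_1)
  have pe: "\<And>x. pinc (a # vs @ [b]) cs x = pinc (a # vs1) cs1 x + pinc (a' # vs2 @ [b]) (csA @ cj # csB) x"
  proof -
    fix x
    have "pinc (a # vs @ [b]) cs x = pinc (butlast (a # vs1) @ [a']) cs1 x + pinc (a' # vs2 @ [b]) cs2 x"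
      unfolding zs csplit by (rule pinc_app[OF ll])
    then show "pinc (a # vs @ [b]) cs x = pinc (a # vs1) cs1 x + pinc (a' # vs2 @ [b]) (csA @ cj # csB) x"
      using e c2split by simp
  qed
  have ae: "adjc G (a # vs @ [b]) cs"
  proof -
    have "adjc G (a # vs @ [b]) cs = (adjc G (butlast (a # vs1) @ [a']) cs1 \<and> adjc G (a' # vs2 @ [b]) cs2)"
      unfolding zs csplit by (rule adjc_app[OF ll])
    then show ?thesis using e c2split v1(5) v2(5) by simp
  qed
  show ?thesis
  proof (intro exI[of _ vs] conjI)
    show "length vs = gg + (2*m+2)" using v1(1) lc1 v2(1) by (simp add: vs_def)
    show "distinct vs" using v1(2) v2(2,3) by (auto simp: vs_def J'_def)
    show "set vs \<inter> J = {}" using v1(3) v2(3) by (auto simp: vs_def J'_def)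
    show "set vs \<subseteq> V" using v1(4) v2(4) by (simp add: vs_def)
    show "adjc G (a # vs @ [b]) cs" by (rule ae)
    have e1: "J' \<union> set vs2 = J \<union> set vs" by (auto simp: J'_def vs_def)
    have e2: "(\<lambda>x. \<mu>1 x - pinc (a' # vs2 @ [b]) (csA @ cj # csB) x) = (\<lambda>x. \<mu> x - pinc (a # vs @ [b]) cs x)"
      using pe by (auto simp: \<mu>1_def)
    show "Good (J \<union> set vs) (\<lambda>x. \<mu> x - pinc (a # vs @ [b]) cs x)" using v2(6) unfolding e1 e2 .
  qed
qed

end


fun ecols :: "('h set \<Rightarrow> nat) \<Rightarrow> 'h list \<Rightarrow> nat list" where
  "ecols col (x # y # r) = col {x, y} # ecols col (y # r)"
| "ecols col _ = []"

lemma length_ecols: "length (ecols col p) = length p - 1"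
  by (induction col p rule: ecols.induct) auto

lemma pe_cons: "path_edges (x # y # r) = insert {x, y} (path_edges (y # r))"
proof -
  have "path_edges (x # y # r) = {{(x # y # r) ! j, (x # y # r) ! Suc j} | j. Suc j < length (x # y # r)}"
    by (simp add: path_edges_def)
  also have "\<dots> = insert {x, y} {{(y # r) ! j, (y # r) ! Suc j} | j. Suc j < length (y # r)}"
  proof (rule set_eqI, rule iffI)
    fix e assume "e \<in> {{(x # y # r) ! j, (x # y # r) ! Suc j} | j. Suc j < length (x # y # r)}"
    then obtain j where j: "e = {(x # y # r) ! j, (x # y # r) ! Suc j}" "Suc j < length (x # y # r)" by blast
    show "e \<in> insert {x, y} {{(y # r) ! j, (y # r) ! Suc j} | j. Suc j < length (y # r)}"
    proof (cases j)
      case 0 then show ?thesis using j by simp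
    next
      case (Suc k) then show ?thesis using j by auto
    qed
  next
    fix e assume "e \<in> insert {x, y} {{(y # r) ! j, (y # r) ! Suc j} | j. Suc j < length (y # r)}"
    then show "e \<in> {{(x # y # r) ! j, (x # y # r) ! Suc j} | j. Suc j < length (x # y # r)}"
    proof
      assume "e = {x, y}"
      then have "e = {(x # y # r) ! 0, (x # y # r) ! Suc 0} \<and> Suc 0 < length (x # y # r)" by simp
      then show ?thesis by blast
    next
      assume "e \<in> {{(y # r) ! j, (y # r) ! Suc j} | j. Suc j < length (y # r)}"
      then obtain j where j: "e = {(y # r) ! j, (y # r) ! Suc j}" "Suc j < length (y # r)" by blast
      then have "e = {(x # y # r) ! Suc j, (x # y # r) ! Suc (Suc j)} \<and> Suc (Suc j) < length (x # y # r)" by simp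
      then show ?thesis by blast
    qed
  qed
  also have "{{(y # r) ! j, (y # r) ! Suc j} | j. Suc j < length (y # r)} = path_edges (y # r)"
    by (simp add: path_edges_def)
  finally show ?thesis .
qed

lemma pe_short: "length p \<le> 1 \<Longrightarrow> path_edges p = {}"
  by (auto simp: path_edges_def)

lemma pe_sub: "e \<in> path_edges p \<Longrightarrow> e \<subseteq> set p"
  by (auto simp: path_edges_def)

lemma pe_rev_sub: "path_edges (rev p) \<subseteq> path_edges p"
proof
  fix e assume "e \<in> path_edges (rev p)"
  then obtain j where j: "e = {rev p ! j, rev p ! Suc j}" "Suc j < length (rev p)"
    by (auto simp: path_edges_def)
  define k where "k = length p - Suc (Suc j)"
  have k: "Suc k < length p" using j(2) by (simp add: k_def)
  have "rev p ! j = p ! Suc k" using j(2) by (simp add: rev_nth k_def Suc_diff_Suc)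
  moreover have "rev p ! Suc j = p ! k" using j(2) by (simp add: rev_nth k_def)
  ultimately have "e = {p ! k, p ! Suc k}" using j(1) by auto
  then show "e \<in> path_edges p" using k by (auto simp: path_edges_def)
qed

lemma pe_rev: "path_edges (rev p) = path_edges p"
  using pe_rev_sub[of p] pe_rev_sub[of "rev p"] by simp

locale hL = absL V t G s D n for V :: "'v set" and t G s D n +
  fixes VH :: "'h set" and EH :: "'h set set" and col :: "'h set \<Rightarrow> nat"
  assumes cg: "colgraph t VH EH col" and md: "max_mon_deg_le t VH EH col D"
    and vroom: "int (card VH) \<le> int n - 6 * int s * int D"
begin

lemma finVH: "finite VH" using cg by (simp add: colgraph_def)

lemma EH_edge: "e \<in> EH \<Longrightarrow> \<exists>x y. e = {x, y} \<and> x \<noteq> y \<and> x \<in> VH \<and> y \<in> VH"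
  using cg by (simp add: colgraph_def)

lemma EH_col: "e \<in> EH \<Longrightarrow> col e \<in> {1..t}"
  using cg by (simp add: colgraph_def)

lemma EH_sub: "e \<in> EH \<Longrightarrow> e \<subseteq> VH" using EH_edge by blast

lemma fin_nb: "E \<subseteq> EH \<Longrightarrow> finite {y. {h, y} \<in> E \<and> P y}"
proof -
  assume E: "E \<subseteq> EH"
  have "{y. {h, y} \<in> E \<and> P y} \<subseteq> VH" using E EH_sub by blast
  then show ?thesis using finVH finite_subset by blast
qed

lemma degc_mono: "E \<subseteq> E' \<Longrightarrow> E' \<subseteq> EH \<Longrightarrow> degc E col i h \<le> degc E' col i h"
  unfolding degc_def by (intro card_mono fin_nb) auto

lemma degc_strict:
  assumes "E \<subseteq> EH" "{h, y} \<in> EH" "{h, y} \<notin> E" "col {h, y} = i"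
  shows "degc E col i h < degc EH col i h"
  unfolding degc_def
proof (rule psubset_card_mono)
  show "finite {ya. {h, ya} \<in> EH \<and> col {h, ya} = i}" using fin_nb[of EH] by simp
  show "{ya. {h, ya} \<in> E \<and> col {h, ya} = i} \<subset> {ya. {h, ya} \<in> EH \<and> col {h, ya} = i}"
    using assms by auto
qed

lemma deg_le: "h \<in> VH \<Longrightarrow> i \<in> {1..t} \<Longrightarrow> degc EH col i h \<le> D"
  using md by (simp add: max_mon_deg_le_def)

definition muH :: "'h set \<Rightarrow> 'h set set \<Rightarrow> ('h \<Rightarrow> 'v) \<Rightarrow> 'v \<times> nat \<Rightarrow> int" where
  "muH W E \<psi> x = int D - int (degpre W E col \<psi> (fst x) (snd x))"

definition Inv :: "'h set \<Rightarrow> 'h set set \<Rightarrow> ('h \<Rightarrow> 'v) \<Rightarrow> bool" where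
  "Inv W E \<psi> \<longleftrightarrow> W \<subseteq> VH \<and> E \<subseteq> EH \<and> (\<forall>e\<in>E. e \<subseteq> W) \<and> inj_on \<psi> W \<and> \<psi> ` W \<subseteq> V \<and>
     (\<forall>x y. {x, y} \<in> E \<longrightarrow> G (col {x, y}) (\<psi> x) (\<psi> y)) \<and> Good (\<psi> ` W) (muH W E \<psi>)"

lemma muH_le: "muH W E \<psi> x \<le> int D" by (simp add: muH_def)

lemma muH_out: "v \<notin> \<psi> ` W \<Longrightarrow> muH W E \<psi> (v,i) = int D"
  by (simp add: muH_def degpre_def)

lemma muH_img: "inj_on \<psi> W \<Longrightarrow> h \<in> W \<Longrightarrow> muH W E \<psi> (\<psi> h, i) = int D - int (degc E col i h)"
  by (simp add: muH_def degpre_def)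

lemma degc_out: "(\<forall>e\<in>E. e \<subseteq> W) \<Longrightarrow> h \<notin> W \<Longrightarrow> degc E col i h = 0"
  unfolding degc_def by (metis (no_types, lifting) Collect_empty_eq card.empty insert_subset)

lemma muH_ext:
  assumes WW: "W \<subseteq> W'" and agree: "\<forall>h\<in>W. \<psi>' h = \<psi> h" and inj: "inj_on \<psi>' W'"
    and Ein: "\<forall>e\<in>E. e \<subseteq> W"
  shows "muH W' E \<psi>' = muH W E \<psi>"
proof
  fix x :: "'v \<times> nat"
  obtain v i where x: "x = (v,i)" by (cases x)
  have injW: "inj_on \<psi> W" using inj WW agree by (metis inj_on_cong inj_on_subset)
  have img: "\<psi> ` W = \<psi>' ` W" using agree by auto
  show "muH W' E \<psi>' x = muH W E \<psi> x"
  proof (cases "v \<in> \<psi>' ` W'")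
    case True
    then obtain h where h: "h \<in> W'" "v = \<psi>' h" by blast
    show ?thesis
    proof (cases "h \<in> W")
      case True
      then show ?thesis using h x muH_img[OF inj h(1)] muH_img[OF injW True] agree by simp
    next
      case False
      have "v \<notin> \<psi> ` W"
      proof
        assume "v \<in> \<psi> ` W"
        then obtain h' where "h' \<in> W" "v = \<psi>' h'" using img by auto
        then have "h' = h" using inj h WW inj_onD by (metis subsetD)
        then show False using False \<open>h' \<in> W\<close> by simp
      qed
      then show ?thesis using h x muH_img[OF inj h(1)] muH_out degc_out[OF Ein False] by simp
    qed
  next
    case False
    then have "v \<notin> \<psi> ` W" using img WW by auto
    then show ?thesis using False x muH_out by simp
  qed
qed

lemma degc_insert:
  assumes "insert {x, y} E \<subseteq> EH" "{x, y} \<notin> E" "x \<noteq> y"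
  shows "degc (insert {x, y} E) col i h = degc E col i h + (if h = x \<and> col {x,y} = i then 1 else 0)
           + (if h = y \<and> col {x,y} = i then 1 else 0)"
proof -
  let ?S = "{z. {h, z} \<in> E \<and> col {h, z} = i}"
  have fS: "finite ?S" using fin_nb[of E] assms(1) by simp
  show ?thesis
  proof (cases "col {x,y} = i \<and> (h = x \<or> h = y)")
    case True
    define o' where "o' = (if h = x then y else x)"
    have ho: "{h, o'} = {x, y}" using True by (auto simp: o'_def)
    have e: "{z. {h, z} \<in> insert {x, y} E \<and> col {h, z} = i} = insert o' ?S"
    proof (rule set_eqI, rule iffI)
      fix z assume z: "z \<in> {z. {h, z} \<in> insert {x, y} E \<and> col {h, z} = i}"
      show "z \<in> insert o' ?S"
      proof (cases "{h, z} = {x, y}")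
        case True
        then have "z = o'" using ho \<open>x \<noteq> y\<close> by (auto simp: doubleton_eq_iff o'_def)
        then show ?thesis by simp
      next
        case False then show ?thesis using z by auto
      qed
    next
      fix z assume "z \<in> insert o' ?S"
      then show "z \<in> {z. {h, z} \<in> insert {x, y} E \<and> col {h, z} = i}" using ho True by auto
    qed
    have "o' \<notin> ?S" using ho assms(2) by auto
    then have "card (insert o' ?S) = Suc (card ?S)" using fS by simp
    moreover have "(if h = x \<and> col {x,y} = i then 1 else 0) + (if h = y \<and> col {x,y} = i then 1 else 0) = (1::nat)"
      using True \<open>x \<noteq> y\<close> by auto
    ultimately show ?thesis unfolding degc_def e by simp
  next
    case False
    have e: "{z. {h, z} \<in> insert {x, y} E \<and> col {h, z} = i} = ?S"
    proof (rule set_eqI, rule iffI)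
      fix z assume z: "z \<in> {z. {h, z} \<in> insert {x, y} E \<and> col {h, z} = i}"
      have "{h, z} \<noteq> {x, y}"
      proof
        assume hz: "{h, z} = {x, y}"
        then have "h = x \<or> h = y" by (auto simp: doubleton_eq_iff)
        moreover have "col {x,y} = i" using z hz by simp
        ultimately show False using False by blast
      qed
      then show "z \<in> ?S" using z by auto
    qed auto
    then show ?thesis using False unfolding degc_def by auto
  qed
qed

lemma muH_edge:
  assumes inj: "inj_on \<psi> W" and xy: "x \<in> W" "y \<in> W" "x \<noteq> y" and EE: "insert {x, y} E \<subseteq> EH" "{x, y} \<notin> E"
  shows "muH W (insert {x, y} E) \<psi> = (\<lambda>z. muH W E \<psi> z - ((if z = (\<psi> x, col {x,y}) then 1 else 0)
            + (if z = (\<psi> y, col {x,y}) then 1 else 0)))"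
proof
  fix z :: "'v \<times> nat"
  obtain v i where z: "z = (v,i)" by (cases z)
  show "muH W (insert {x, y} E) \<psi> z = muH W E \<psi> z - ((if z = (\<psi> x, col {x,y}) then 1 else 0)
            + (if z = (\<psi> y, col {x,y}) then 1 else 0))"
  proof (cases "v \<in> \<psi> ` W")
    case True
    then obtain h where h: "h \<in> W" "v = \<psi> h" by blast
    have hx: "(\<psi> h = \<psi> x) = (h = x)" "(\<psi> h = \<psi> y) = (h = y)"
      using inj_on_eq_iff[OF inj h(1) xy(1)] inj_on_eq_iff[OF inj h(1) xy(2)] by auto
    have e1: "(z = (\<psi> x, col {x,y})) = (h = x \<and> col {x,y} = i)" using hx z h(2) by auto
    have e2: "(z = (\<psi> y, col {x,y})) = (h = y \<and> col {x,y} = i)" using hx z h(2) by auto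
    have m1: "muH W (insert {x, y} E) \<psi> z = int D - int (degc (insert {x, y} E) col i h)"
      using muH_img[OF inj h(1)] z h(2) by simp
    have m2: "muH W E \<psi> z = int D - int (degc E col i h)"
      using muH_img[OF inj h(1)] z h(2) by simp
    show ?thesis unfolding m1 m2 e1 e2 degc_insert[OF EE xy(3), of i h] by simp
  next
    case False
    then have "v \<noteq> \<psi> x" "v \<noteq> \<psi> y" using xy by auto
    then show ?thesis using False z muH_out by simp
  qed
qed

lemma muH_path:
  "distinct p \<Longrightarrow> set p \<subseteq> W \<Longrightarrow> inj_on \<psi> W \<Longrightarrow> E \<union> path_edges p \<subseteq> EH \<Longrightarrow> path_edges p \<inter> E = {} \<Longrightarrow>
   muH W (E \<union> path_edges p) \<psi> = (\<lambda>z. muH W E \<psi> z - pinc (map \<psi> p) (ecols col p) z)"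
proof (induction p rule: induct_list012)
  case (3 x y r)
  have pe: "path_edges (x # y # r) = insert {x,y} (path_edges (y # r))" by (rule pe_cons)
  have ih: "muH W (E \<union> path_edges (y # r)) \<psi> = (\<lambda>z. muH W E \<psi> z - pinc (map \<psi> (y # r)) (ecols col (y # r)) z)"
    using "3.IH"(2) "3.prems" pe by auto
  have nin: "{x,y} \<notin> E \<union> path_edges (y # r)"
  proof
    assume "{x,y} \<in> E \<union> path_edges (y # r)"
    moreover have "{x,y} \<notin> E" using "3.prems"(5) pe by auto
    ultimately have "{x,y} \<in> path_edges (y # r)" by simp
    then have "x \<in> set (y # r)" using pe_sub by blast
    then show False using "3.prems"(1) by simp
  qed
  have e2: "E \<union> path_edges (x # y # r) = insert {x,y} (E \<union> path_edges (y # r))" using pe by auto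
  have xy: "x \<in> W" "y \<in> W" "x \<noteq> y" using "3.prems"(1,2) by auto
  have EE: "insert {x, y} (E \<union> path_edges (y # r)) \<subseteq> EH" using "3.prems"(4) e2 by simp
  show ?case unfolding e2 muH_edge[OF "3.prems"(3) xy EE nin] ih by (auto simp: algebra_simps)
next
  case 1
  then show ?case by (simp add: pe_short)
next
  case (2 v)
  then show ?case by (simp add: pe_short)
qed

end


lemma ecols_cons2: "ecols col (x # y # r) = col {x, y} # ecols col (y # r)" by simp

lemma set_ecols: "set (ecols col p) \<subseteq> col ` path_edges p"
proof (induction p rule: induct_list012)
  case (3 x y zs)
  then show ?case using pe_cons[of x y zs] by auto
qed auto

lemma ecols_last: "last (ecols col (xs @ [y, z])) = col {y, z}"
proof (induction xs)
  case Nil then show ?case by simp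
next
  case (Cons x xs)
  obtain a r where ar: "xs @ [y, z] = a # r" "r \<noteq> []" by (cases xs) auto
  have ne: "ecols col (a # r) \<noteq> []" using ar(2) by (cases r) auto
  have "ecols col ((x # xs) @ [y, z]) = col {x, a} # ecols col (a # r)" using ar(1) by simp
  then show ?case using Cons ar(1) ne by simp
qed

lemma edge_new:
  assumes p: "p = u # np @ tl0" and lt: "length tl0 \<le> 1" and ne: "np \<noteq> []" and j: "Suc j < length p"
  shows "p ! j \<in> set np \<or> p ! Suc j \<in> set np"
proof (cases j)
  case 0
  then have "p ! Suc j = np ! 0" using p ne by (simp add: nth_append)
  then show ?thesis using ne by simp
next
  case (Suc k)
  have "k < length np" using j lt p Suc by simp
  then have "p ! j = np ! k" using p Suc by (simp add: nth_append)
  then show ?thesis using \<open>k < length np\<close> by simp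
qed

context hL
begin

lemma adjc_edges:
  "adjc G (map \<psi> p) (ecols col p) \<Longrightarrow> path_edges p \<subseteq> EH \<Longrightarrow> {x, y} \<in> path_edges p \<Longrightarrow>
   G (col {x, y}) (\<psi> x) (\<psi> y)"
proof (induction p rule: induct_list012)
  case (3 a b zs)
  have pe: "path_edges (a # b # zs) = insert {a, b} (path_edges (b # zs))" by (rule pe_cons)
  have g1: "G (col {a, b}) (\<psi> a) (\<psi> b)" and g2: "adjc G (map \<psi> (b # zs)) (ecols col (b # zs))"
    using "3.prems"(1) by auto
  show ?case
  proof (cases "{x, y} = {a, b}")
    case True
    have cT: "col {a, b} \<in> {1..t}" using "3.prems"(2) pe EH_col by auto
    from True have "x = a \<and> y = b \<or> x = b \<and> y = a" by (auto simp: doubleton_eq_iff)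
    then show ?thesis
    proof
      assume "x = a \<and> y = b" then show ?thesis using g1 by simp
    next
      assume xy: "x = b \<and> y = a"
      then have "G (col {a, b}) (\<psi> b) (\<psi> a)" using Gsym[OF cT g1] by simp
      moreover have "{x, y} = {a, b}" using xy by auto
      ultimately show ?thesis using xy by simp
    qed
  next
    case False
    then have "{x, y} \<in> path_edges (b # zs)" using "3.prems"(3) pe by auto
    then show ?thesis using "3.IH"(2) g2 "3.prems"(2) pe by auto
  qed
qed (auto simp: pe_short)

lemma realize:
  assumes inv: "Inv W E \<psi>" and pEH: "path_edges p \<subseteq> EH" and dp: "distinct p" and pV: "set p \<subseteq> VH"
    and disj: "path_edges p \<inter> E = {}"
    and agree: "\<forall>h\<in>W. \<psi>' h = \<psi> h" and inj': "inj_on \<psi>' (W \<union> set p)"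
    and img: "\<psi>' ` (W \<union> set p) = \<psi> ` W \<union> S" and SV: "S \<subseteq> V"
    and adj: "adjc G (map \<psi>' p) (ecols col p)"
    and gd: "Good (\<psi> ` W \<union> S) (\<lambda>x. muH W E \<psi> x - pinc (map \<psi>' p) (ecols col p) x)"
  shows "Inv (W \<union> set p) (E \<union> path_edges p) \<psi>'"
proof -
  have I: "W \<subseteq> VH" "E \<subseteq> EH" "\<forall>e\<in>E. e \<subseteq> W" "inj_on \<psi> W" "\<psi> ` W \<subseteq> V"
    "\<forall>x y. {x, y} \<in> E \<longrightarrow> G (col {x, y}) (\<psi> x) (\<psi> y)"
    using inv unfolding Inv_def by simp_all
  have m1: "muH (W \<union> set p) (E \<union> path_edges p) \<psi>' = (\<lambda>z. muH (W \<union> set p) E \<psi>' z - pinc (map \<psi>' p) (ecols col p) z)"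
    using muH_path[OF dp _ inj'] pEH I(2) disj by auto
  have m2: "muH (W \<union> set p) E \<psi>' = muH W E \<psi>"
    using muH_ext[OF _ agree inj' I(3)] by auto
  show ?thesis unfolding Inv_def
  proof (intro conjI)
    show "W \<union> set p \<subseteq> VH" using I(1) pV by simp
    show "E \<union> path_edges p \<subseteq> EH" using I(2) pEH by simp
    show "\<forall>e\<in>E \<union> path_edges p. e \<subseteq> W \<union> set p" using I(3) pe_sub by blast
    show "inj_on \<psi>' (W \<union> set p)" by (rule inj')
    show "\<psi>' ` (W \<union> set p) \<subseteq> V" using img I(5) SV by simp
    show "\<forall>x y. {x, y} \<in> E \<union> path_edges p \<longrightarrow> G (col {x, y}) (\<psi>' x) (\<psi>' y)"
    proof (intro allI impI)
      fix x y assume "{x, y} \<in> E \<union> path_edges p"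
      then show "G (col {x, y}) (\<psi>' x) (\<psi>' y)"
      proof
        assume e: "{x, y} \<in> E"
        then have "x \<in> W" "y \<in> W" using I(3) by auto
        then show ?thesis using I(6) e agree by simp
      next
        assume "{x, y} \<in> path_edges p"
        then show ?thesis using adjc_edges[OF adj pEH] by blast
      qed
    qed
    show "Good (\<psi>' ` (W \<union> set p)) (muH (W \<union> set p) (E \<union> path_edges p) \<psi>')"
      unfolding img m1 m2 using gd .
  qed
qed

lemma extend:
  assumes dnp: "distinct np" and nW: "set np \<inter> W = {}" and len: "length vs = length np"
    and dvs: "distinct vs" and vW: "set vs \<inter> \<psi> ` W = {}" and inj: "inj_on \<psi> W"
  defines "\<psi>' \<equiv> (\<lambda>h. case map_of (zip np vs) h of None \<Rightarrow> \<psi> h | Some v \<Rightarrow> v)"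
  shows "\<forall>h\<in>W. \<psi>' h = \<psi> h" "map \<psi>' np = vs" "inj_on \<psi>' (W \<union> set np)"
    "\<psi>' ` (W \<union> set np) = \<psi> ` W \<union> set vs"
proof -
  have out: "\<And>h. h \<notin> set np \<Longrightarrow> \<psi>' h = \<psi> h"
  proof -
    fix h assume "h \<notin> set np"
    then have "map_of (zip np vs) h = None" using map_of_zip_is_None[OF len[symmetric]] by simp
    then show "\<psi>' h = \<psi> h" by (simp add: \<psi>'_def)
  qed
  have inn: "\<And>j. j < length np \<Longrightarrow> \<psi>' (np ! j) = vs ! j"
  proof -
    fix j assume "j < length np"
    then have "map_of (zip np vs) (np ! j) = Some (vs ! j)"
      using map_of_zip_nth[OF len[symmetric] dnp] len by simp
    then show "\<psi>' (np ! j) = vs ! j" by (simp add: \<psi>'_def)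
  qed
  show ag: "\<forall>h\<in>W. \<psi>' h = \<psi> h" using out nW by auto
  show mp: "map \<psi>' np = vs" using inn len by (intro nth_equalityI) auto
  have imgnp: "\<psi>' ` set np = set vs" using mp by (metis list.set_map)
  have injnp: "inj_on \<psi>' (set np)"
  proof -
    have "distinct (map \<psi>' np)" using mp dvs by simp
    then show ?thesis by (simp add: distinct_map)
  qed
  have injW: "inj_on \<psi>' W" using inj ag by (metis inj_on_cong)
  have imgW: "\<psi>' ` W = \<psi> ` W" using ag by auto
  show "inj_on \<psi>' (W \<union> set np)"
    using injW injnp imgW imgnp vW by (auto simp: inj_on_Un)
  show "\<psi>' ` (W \<union> set np) = \<psi> ` W \<union> set vs" using imgW imgnp by auto
qed

end


context absL
begin

lemma qq2: "qq \<ge> 2" using D3 by (simp add: qq_def)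

lemma tsize_bound: "tsize m + 1 \<le> 2 * qq ^ m"
proof (induction m)
  case 0 then show ?case by (simp add: tsize_def)
next
  case (Suc m)
  have "tsize (Suc m) + 1 = tsize m + 1 + qq ^ Suc m" by (simp add: tsize_def)
  also have "\<dots> \<le> 2 * qq ^ m + qq ^ Suc m" using Suc by simp
  also have "2 * qq ^ m \<le> qq ^ Suc m" using qq2 by simp
  finally show ?case by simp
qed

end

context hL
begin

lemma extend_ex:
  assumes dnp: "distinct np" and nW: "set np \<inter> W = {}" and len: "length vs = length np"
    and dvs: "distinct vs" and vW: "set vs \<inter> \<psi> ` W = {}" and inj: "inj_on \<psi> W"
  shows "\<exists>\<psi>'. (\<forall>h\<in>W. \<psi>' h = \<psi> h) \<and> map \<psi>' np = vs \<and> inj_on \<psi>' (W \<union> set np) \<and>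
    \<psi>' ` (W \<union> set np) = \<psi> ` W \<union> set vs"
proof -
  obtain f where f: "f = (\<lambda>h. case map_of (zip np vs) h of None \<Rightarrow> \<psi> h | Some v \<Rightarrow> v)" by simp
  have "(\<forall>h\<in>W. f h = \<psi> h) \<and> map f np = vs \<and> inj_on f (W \<union> set np) \<and> f ` (W \<union> set np) = \<psi> ` W \<union> set vs"
    unfolding f using extend[OF assms] by simp
  then show ?thesis by blast
qed

lemma path_facts:
  assumes "is_path EH p"
  shows "path_edges p \<subseteq> EH" "distinct p" "length p \<ge> 2 \<Longrightarrow> set p \<subseteq> VH"
proof -
  have pe: "\<forall>j. Suc j < length p \<longrightarrow> {p ! j, p ! Suc j} \<in> EH" "distinct p" using assms by (auto simp: is_path_def)
  show "path_edges p \<subseteq> EH" using pe(1) by (auto simp: path_edges_def)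
  show "distinct p" using pe(2) .
  assume l: "length p \<ge> 2"
  show "set p \<subseteq> VH"
  proof
    fix x assume "x \<in> set p"
    then obtain j where j: "j < length p" "x = p ! j" by (auto simp: in_set_conv_nth)
    show "x \<in> VH"
    proof (cases "Suc j < length p")
      case True
      then have "{p ! j, p ! Suc j} \<in> EH" using pe(1) by blast
      then show ?thesis using EH_sub j(2) by blast
    next
      case False
      then obtain k where k: "j = Suc k" using l j(1) by (cases j) auto
      then have "{p ! k, p ! Suc k} \<in> EH" using pe(1) j(1) by blast
      then show ?thesis using EH_sub j(2) k by blast
    qed
  qed
qed

lemma vroom': "int (card VH) \<le> int n - 6 * (int s * int D)" using vroom by (simp add: mult.assoc)

lemma sD: "int s \<le> int s * int D"
proof -
  have "s * 1 \<le> s * D" using D3 by (intro mult_le_mono2) simp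
  then have "int (s * 1) \<le> int (s * D)" by (simp only: of_nat_le_iff)
  then show ?thesis by simp
qed

lemma sD0: "0 \<le> int s * int D" by simp

lemma NVH: "int (card VH) \<le> N0"
proof -
  have "N0 = int n - 2 * (int s * int D) - int s" unfolding N0_def by (simp add: mult.assoc)
  then show ?thesis using vroom' sD sD0 by linarith
qed

lemma slack_edge:
  assumes inv: "Inv W E \<psi>" and u: "u \<in> W" and e: "{u, v} \<in> EH" and v: "v \<notin> W"
  shows "muH W E \<psi> (\<psi> u, col {u, v}) \<ge> 1"
proof -
  have I: "E \<subseteq> EH" "\<forall>e\<in>E. e \<subseteq> W" "inj_on \<psi> W" "W \<subseteq> VH" using inv by (auto simp: Inv_def)
  have "{u, v} \<notin> E" using I(2) v by auto
  then have "degc E col (col {u,v}) u < degc EH col (col {u,v}) u" using degc_strict[OF I(1) e] by simp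
  moreover have "degc EH col (col {u,v}) u \<le> D" using deg_le EH_col[OF e] u I(4) by auto
  ultimately show ?thesis using muH_img[OF I(3) u] by simp
qed

lemma step_free:
  assumes inv: "Inv W E \<psi>" and pth: "is_path EH p" and p: "p = u # np" and uW: "u \<in> W"
    and nW: "set np \<inter> W = {}" and ne: "np \<noteq> []"
  shows "\<exists>\<psi>'. Inv (W \<union> set p) (E \<union> path_edges p) \<psi>' \<and> (\<forall>h\<in>W. \<psi>' h = \<psi> h)"
proof -
  have I: "W \<subseteq> VH" "E \<subseteq> EH" "\<forall>e\<in>E. e \<subseteq> W" "inj_on \<psi> W" "\<psi> ` W \<subseteq> V" "Good (\<psi> ` W) (muH W E \<psi>)"
    using inv unfolding Inv_def by simp_all
  have lp: "length p \<ge> 2" using p ne by (cases np) auto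
  have pEH: "path_edges p \<subseteq> EH" and dp: "distinct p" and pV: "set p \<subseteq> VH"
    using path_facts[OF pth] lp by auto
  have dnp: "distinct np" using dp p by simp
  define cs where "cs = ecols col p"
  have lcs: "length cs = length np" using length_ecols[of col p] p by (simp add: cs_def)
  have cT: "set cs \<subseteq> {1..t}"
  proof
    fix c assume "c \<in> set cs"
    then obtain e where "e \<in> path_edges p" "c = col e" using set_ecols[of col p] by (auto simp: cs_def)
    then show "c \<in> {1..t}" using pEH EH_col by blast
  qed
  obtain v1 r where v1: "np = v1 # r" using ne by (cases np) auto
  have e1: "{u, v1} \<in> EH" using pEH p v1 pe_cons[of u v1 r] by auto
  have v1W: "v1 \<notin> W" using nW v1 by auto
  have hcs: "hd cs = col {u, v1}" using p v1 by (simp add: cs_def)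
  have sl: "cs \<noteq> [] \<longrightarrow> muH W E \<psi> (\<psi> u, hd cs) \<ge> 1" using slack_edge[OF inv uW e1 v1W] hcs by simp
  have fW: "finite W" using I(1) finVH finite_subset by blast
  have cW: "card (\<psi> ` W) = card W" using card_image[OF I(4)] .
  have "card (W \<union> set np) = card W + length np"
  proof -
    have nW': "W \<inter> set np = {}" using nW by blast
    show ?thesis using card_Un_disjoint[OF fW _ nW'] distinct_card[OF dnp] by simp
  qed
  moreover have "card (W \<union> set np) \<le> card VH" using I(1) pV p finVH by (intro card_mono) auto
  ultimately have room: "int (card (\<psi> ` W)) + int (length cs) \<le> N0" using NVH cW lcs by linarith
  have muD: "\<forall>v i. v \<notin> \<psi> ` W \<longrightarrow> muH W E \<psi> (v,i) = int D" using muH_out by blast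
  have mu: "\<forall>x. muH W E \<psi> x \<le> int D" using muH_le by blast
  have fJ: "finite (\<psi> ` W)" using fW by simp
  have aJ: "\<psi> u \<in> \<psi> ` W" using uW by simp
  obtain vs where vs: "length vs = length cs" "distinct vs" "set vs \<inter> \<psi> ` W = {}" "set vs \<subseteq> V"
      "adjc G (\<psi> u # vs) cs" "Good (\<psi> ` W \<union> set vs) (\<lambda>x. muH W E \<psi> x - pinc (\<psi> u # vs) cs x)"
    using pathfree[OF I(6) fJ I(5) aJ mu muD cT sl room] by blast
  have lv: "length vs = length np" using vs(1) lcs by simp
  obtain \<psi>' where ex: "\<forall>h\<in>W. \<psi>' h = \<psi> h" "map \<psi>' np = vs" "inj_on \<psi>' (W \<union> set np)"
    "\<psi>' ` (W \<union> set np) = \<psi> ` W \<union> set vs"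
    using extend_ex[OF dnp nW lv vs(2,3) I(4)] by blast
  have mp: "map \<psi>' p = \<psi> u # vs" using ex(1,2) p uW by simp
  have WP: "W \<union> set p = W \<union> set np" using p uW by auto
  have disj: "path_edges p \<inter> E = {}"
  proof (rule ccontr)
    assume "path_edges p \<inter> E \<noteq> {}"
    then obtain e where e: "e \<in> path_edges p" "e \<in> E" by blast
    then obtain j where j: "e = {p ! j, p ! Suc j}" "Suc j < length p" by (auto simp: path_edges_def)
    have "p ! j \<in> set np \<or> p ! Suc j \<in> set np" using edge_new[of p u np "[]" j] p ne j(2) by simp
    moreover have "e \<subseteq> W" using I(3) e(2) by blast
    ultimately show False using j(1) nW by blast
  qed
  have "Inv (W \<union> set p) (E \<union> path_edges p) \<psi>'"
  proof (rule realize[OF inv pEH dp pV disj ex(1)])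
    show "inj_on \<psi>' (W \<union> set p)" using ex(3) WP by simp
    show "\<psi>' ` (W \<union> set p) = \<psi> ` W \<union> set vs" using ex(4) WP by simp
    show "set vs \<subseteq> V" using vs(4) .
    show "adjc G (map \<psi>' p) (ecols col p)" using mp vs(5) by (simp add: cs_def)
    show "Good (\<psi> ` W \<union> set vs) (\<lambda>x. muH W E \<psi> x - pinc (map \<psi>' p) (ecols col p) x)"
      using mp vs(6) by (simp add: cs_def)
  qed
  then show ?thesis using ex(1) by blast
qed

lemma step_join:
  assumes inv: "Inv W E \<psi>" and pth: "is_path EH p" and p: "p = u # np @ [w]" and uW: "u \<in> W" and wW: "w \<in> W"
    and nW: "set np \<inter> W = {}" and lnp: "length np = gg + (2*m+2)"
    and sq: "s \<le> qq^m" and sq2: "qq^m \<le> qq * s"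
  shows "\<exists>\<psi>'. Inv (W \<union> set p) (E \<union> path_edges p) \<psi>' \<and> (\<forall>h\<in>W. \<psi>' h = \<psi> h)"
proof -
  have I: "W \<subseteq> VH" "E \<subseteq> EH" "\<forall>e\<in>E. e \<subseteq> W" "inj_on \<psi> W" "\<psi> ` W \<subseteq> V" "Good (\<psi> ` W) (muH W E \<psi>)"
    using inv unfolding Inv_def by simp_all
  have ne: "np \<noteq> []" using lnp by auto
  have lp: "length p \<ge> 2" using p by simp
  have pEH: "path_edges p \<subseteq> EH" and dp: "distinct p" and pV: "set p \<subseteq> VH"
    using path_facts[OF pth] lp by auto
  have dnp: "distinct np" using dp p by simp
  have uw: "u \<noteq> w" using dp p by simp
  define cs where "cs = ecols col p"
  have lcs: "length cs = gg + (2*m+3)" using length_ecols[of col p] p lnp by (simp add: cs_def)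
  have cT: "set cs \<subseteq> {1..t}"
  proof
    fix c assume "c \<in> set cs"
    then obtain e where "e \<in> path_edges p" "c = col e" using set_ecols[of col p] by (auto simp: cs_def)
    then show "c \<in> {1..t}" using pEH EH_col by blast
  qed
  obtain v1 r where v1: "np = v1 # r" using ne by (cases np) auto
  have e1: "{u, v1} \<in> EH" using pEH p v1 pe_cons[of u v1 "r @ [w]"] by auto
  have v1W: "v1 \<notin> W" using nW v1 by auto
  have hcs: "hd cs = col {u, v1}" using p v1 by (simp add: cs_def)
  have slA: "muH W E \<psi> (\<psi> u, hd cs) \<ge> 1" using slack_edge[OF inv uW e1 v1W] hcs by simp
  define z where "z = last np"
  have "last np \<in> set np" using ne by simp
  then have zW: "z \<notin> W" using nW unfolding z_def by blast
  have p2: "p = (u # butlast np) @ [z, w]" using p ne by (simp add: z_def)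
  have lcs2: "last cs = col {z, w}" using ecols_last[of col "u # butlast np" z w] p2 by (simp add: cs_def)
  have ezw: "{z, w} \<in> EH"
  proof -
    have jj: "Suc (length np) < length p" using p by simp
    have "{p ! length np, p ! Suc (length np)} \<in> path_edges p"
      unfolding path_edges_def using jj by blast
    moreover have lu: "length (u # butlast np) = length np" using ne by simp
    moreover have "p ! length np = z" "p ! Suc (length np) = w"
    proof -
      have "p ! length (u # butlast np) = z" unfolding p2 by (simp only: nth_append_length)
      then show "p ! length np = z" using lu by simp
      have "p ! (length (u # butlast np) + 1) = [z, w] ! 1" unfolding p2 by (simp only: nth_append_length_plus)
      then show "p ! Suc (length np) = w" using lu by simp
    qed
    ultimately show ?thesis using pEH by auto
  qed
  have ewz: "{w, z} \<in> EH" using ezw by (simp add: insert_commute)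
  have slB: "muH W E \<psi> (\<psi> w, last cs) \<ge> 1" using slack_edge[OF inv wW ewz zW] lcs2
    by (simp add: insert_commute)
  have fW: "finite W" using I(1) finVH finite_subset by blast
  have cW: "card (\<psi> ` W) = card W" using card_image[OF I(4)] .
  have "card (W \<union> set np) = card W + length np"
  proof -
    have nW': "W \<inter> set np = {}" using nW by blast
    show ?thesis using card_Un_disjoint[OF fW _ nW'] distinct_card[OF dnp] by simp
  qed
  moreover have "card (W \<union> set np) \<le> card VH" using I(1) pV p finVH by (intro card_mono) auto
  ultimately have f1: "int (card W) + int gg + 2 \<le> int n - 6 * (int s * int D)"
    using vroom' lnp by linarith
  have "tsize m + 1 \<le> 2 * qq ^ m" by (rule tsize_bound)
  then have f2: "2 * int (tsize m) + 2 \<le> 4 * int (qq ^ m)" by linarith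
  have "int (qq ^ m) \<le> int (qq * s)" using sq2 by (simp only: of_nat_le_iff)
  moreover have "int (qq * s) = int s * int D - int s" using D3 unfolding qq_def
    by (simp add: of_nat_diff algebra_simps)
  ultimately have f3: "int (qq ^ m) \<le> int s * int D - int s" by linarith
  have n0: "N0 = int n - 2 * (int s * int D) - int s" unfolding N0_def by (simp add: mult.assoc)
  have room: "int (card (\<psi> ` W)) + int gg + 2 * int (tsize m) \<le> N0 + 1"
    using f1 f2 f3 n0 cW sD0 by linarith
  have muD: "\<forall>v i. v \<notin> \<psi> ` W \<longrightarrow> muH W E \<psi> (v,i) = int D" using muH_out by blast
  have mu: "\<forall>x. muH W E \<psi> x \<le> int D" using muH_le by blast
  have fJ: "finite (\<psi> ` W)" using fW by simp
  have aJ: "\<psi> u \<in> \<psi> ` W" and bJ: "\<psi> w \<in> \<psi> ` W" using uW wW by simp_all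
  have ab: "\<psi> u \<noteq> \<psi> w" using I(4) uW wW uw inj_on_eq_iff by metis
  obtain vs where vs: "length vs = gg + (2*m+2)" "distinct vs" "set vs \<inter> \<psi> ` W = {}" "set vs \<subseteq> V"
      "adjc G (\<psi> u # vs @ [\<psi> w]) cs" "Good (\<psi> ` W \<union> set vs) (\<lambda>x. muH W E \<psi> x - pinc (\<psi> u # vs @ [\<psi> w]) cs x)"
    using joinfull[OF I(6) fJ I(5) aJ bJ ab mu muD cT lcs slA slB sq room] by blast
  have lv: "length vs = length np" using vs(1) lnp by simp
  obtain \<psi>' where ex: "\<forall>h\<in>W. \<psi>' h = \<psi> h" "map \<psi>' np = vs" "inj_on \<psi>' (W \<union> set np)"
    "\<psi>' ` (W \<union> set np) = \<psi> ` W \<union> set vs"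
    using extend_ex[OF dnp nW lv vs(2,3) I(4)] by blast
  have mp: "map \<psi>' p = \<psi> u # vs @ [\<psi> w]" using ex(1,2) p uW wW by simp
  have WP: "W \<union> set p = W \<union> set np" using p uW wW by auto
  have disj: "path_edges p \<inter> E = {}"
  proof (rule ccontr)
    assume "path_edges p \<inter> E \<noteq> {}"
    then obtain e where e: "e \<in> path_edges p" "e \<in> E" by blast
    then obtain j where j: "e = {p ! j, p ! Suc j}" "Suc j < length p" by (auto simp: path_edges_def)
    have "p ! j \<in> set np \<or> p ! Suc j \<in> set np" using edge_new[of p u np "[w]" j] p ne j(2) by simp
    moreover have "e \<subseteq> W" using I(3) e(2) by blast
    ultimately show False using j(1) nW by blast
  qed
  have "Inv (W \<union> set p) (E \<union> path_edges p) \<psi>'"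
  proof (rule realize[OF inv pEH dp pV disj ex(1)])
    show "inj_on \<psi>' (W \<union> set p)" using ex(3) WP by simp
    show "\<psi>' ` (W \<union> set p) = \<psi> ` W \<union> set vs" using ex(4) WP by simp
    show "set vs \<subseteq> V" using vs(4) .
    show "adjc G (map \<psi>' p) (ecols col p)" using mp vs(5) by (simp add: cs_def)
    show "Good (\<psi> ` W \<union> set vs) (\<lambda>x. muH W E \<psi> x - pinc (map \<psi>' p) (ecols col p) x)"
      using mp vs(6) by (simp add: cs_def)
  qed
  then show ?thesis using ex(1) by blast
qed

lemma step_iso:
  assumes inv: "Inv W E \<psi>" and z: "z \<in> VH" "z \<notin> W"
  shows "\<exists>\<psi>'. Inv (insert z W) E \<psi>' \<and> (\<forall>h\<in>W. \<psi>' h = \<psi> h)"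
proof -
  have I: "W \<subseteq> VH" "E \<subseteq> EH" "\<forall>e\<in>E. e \<subseteq> W" "inj_on \<psi> W" "\<psi> ` W \<subseteq> V"
    "\<forall>x y. {x, y} \<in> E \<longrightarrow> G (col {x, y}) (\<psi> x) (\<psi> y)" "Good (\<psi> ` W) (muH W E \<psi>)"
    using inv unfolding Inv_def by simp_all
  have fW: "finite W" using I(1) finVH finite_subset by blast
  have cW: "card (\<psi> ` W) = card W" using card_image[OF I(4)] .
  have "card (insert z W) \<le> card VH" using I(1) z finVH by (intro card_mono) auto
  then have cWl: "card W + 1 \<le> card VH" using fW z(2) by simp
  have ok: "OK (\<psi> ` W) (muH W E \<psi>)" unfolding OK_def using I(7) fW cW cWl NVH muH_le by simp
  have "int s * int D \<le> 6 * int s * int D" using s1 D3 by simp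
  then have room: "int (card (\<psi> ` W)) + int s * int D < int n" using cW cWl vroom by linarith
  obtain v where v: "v \<in> V" "v \<notin> \<psi> ` W" "Good (insert v (\<psi> ` W)) (muH W E \<psi>)"
    using isolated[OF ok room] by blast
  define \<psi>' where "\<psi>' = \<psi>(z := v)"
  have ag: "\<forall>h\<in>W. \<psi>' h = \<psi> h" using z(2) by (auto simp: \<psi>'_def)
  have inj': "inj_on \<psi>' (insert z W)"
  proof -
    have "inj_on \<psi>' W" using I(4) ag by (metis inj_on_cong)
    moreover have "\<psi>' z \<notin> \<psi>' ` W" using v(2) ag by (auto simp: \<psi>'_def)
    moreover have "W - {z} = W" using z(2) by auto
    ultimately show ?thesis by simp
  qed
  have i1: "\<psi>' ` W = \<psi> ` W" by (rule image_cong) (use ag in auto)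
  have pz: "\<psi>' z = v" by (simp add: \<psi>'_def)
  have img: "\<psi>' ` insert z W = insert v (\<psi> ` W)" using i1 pz by (simp only: image_insert)
  have m: "muH (insert z W) E \<psi>' = muH W E \<psi>" using muH_ext[OF _ ag inj' I(3)] by auto
  have "Inv (insert z W) E \<psi>'"
    unfolding Inv_def
  proof (intro conjI)
    show "insert z W \<subseteq> VH" using I(1) z(1) by simp
    show "E \<subseteq> EH" by (rule I(2))
    show "\<forall>e\<in>E. e \<subseteq> insert z W" using I(3) by blast
    show "inj_on \<psi>' (insert z W)" by (rule inj')
    show "\<psi>' ` insert z W \<subseteq> V" using img I(5) v(1) by simp
    show "\<forall>x y. {x, y} \<in> E \<longrightarrow> G (col {x, y}) (\<psi>' x) (\<psi>' y)"
    proof (intro allI impI)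
      fix x y assume e: "{x, y} \<in> E"
      then have "x \<in> W" "y \<in> W" using I(3) by auto
      then show "G (col {x, y}) (\<psi>' x) (\<psi>' y)" using I(6) e ag by simp
    qed
    show "Good (\<psi>' ` insert z W) (muH (insert z W) E \<psi>')" unfolding img m using v(3) .
  qed
  then show ?thesis using ag by blast
qed

end


context hL
begin

lemma Phi_Rval: "Phi (\<psi> ` W) (muH W E \<psi>) X = Rval V G D W E col R \<psi> X + int (card (Pset W E col R \<psi> \<inter> X))"
  unfolding Phi_def Rval_def muH_def by (simp add: case_prod_beta)

lemma Inv_init:
  assumes "colgraph t VH0 EH0 col" "colsubgraph VH0 EH0 VH EH" "embedding V G VH0 EH0 col \<phi>"
    "good V t G (2 * s) D VH0 EH0 col R0 \<phi>"
  shows "Inv VH0 EH0 \<phi>"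
  unfolding Inv_def
proof (intro conjI)
  show "VH0 \<subseteq> VH" "EH0 \<subseteq> EH" using assms(2) by (auto simp: colsubgraph_def)
  show "\<forall>e\<in>EH0. e \<subseteq> VH0"
  proof
    fix e assume "e \<in> EH0"
    then obtain x y where "e = {x, y}" "x \<in> VH0" "y \<in> VH0" using assms(1) unfolding colgraph_def by blast
    then show "e \<subseteq> VH0" by simp
  qed
  have em: "inj_on \<phi> VH0 \<and> \<phi> ` VH0 \<subseteq> V \<and> (\<forall>x y. {x, y} \<in> EH0 \<longrightarrow> G (col {x, y}) (\<phi> x) (\<phi> y))"
    using assms(3) unfolding embedding_def .
  then show "inj_on \<phi> VH0" "\<phi> ` VH0 \<subseteq> V" "\<forall>x y. {x, y} \<in> EH0 \<longrightarrow> G (col {x, y}) (\<phi> x) (\<phi> y)"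
    by simp_all
  show "Good (\<phi> ` VH0) (muH VH0 EH0 \<phi>)"
    unfolding Good_def
  proof (intro allI impI)
    fix X assume X: "X \<subseteq> V \<times> {1..t} \<and> card X \<le> 2 * s"
    have "0 \<le> Rval V G D VH0 EH0 col R0 \<phi> X" using assms(4) X unfolding good_def by simp
    then show "0 \<le> Phi (\<phi> ` VH0) (muH VH0 EH0 \<phi>) X" unfolding Phi_Rval[of _ _ _ _ R0] by simp
  qed
qed

lemma Inv_final:
  assumes "Inv VH EH \<psi>"
  shows "rooted VH EH VH" "embedding V G VH EH col \<psi>" "good V t G (2 * s) D VH EH col VH \<psi>"
proof -
  have I: "inj_on \<psi> VH" "\<psi> ` VH \<subseteq> V" "\<forall>x y. {x, y} \<in> EH \<longrightarrow> G (col {x, y}) (\<psi> x) (\<psi> y)"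
    "Good (\<psi> ` VH) (muH VH EH \<psi>)"
    using assms unfolding Inv_def by simp_all
  show "embedding V G VH EH col \<psi>" using I by (simp add: embedding_def)
  have ps: "Pset VH EH col VH \<psi> = {}" by (simp add: Pset_def)
  show "good V t G (2 * s) D VH EH col VH \<psi>"
    unfolding good_def
  proof (intro allI impI)
    fix X assume X: "X \<subseteq> V \<times> {1..t} \<and> card X \<le> 2 * s"
    have "0 \<le> Phi (\<psi> ` VH) (muH VH EH \<psi>) X" using I(4) X unfolding Good_def by simp
    then show "0 \<le> Rval V G D VH EH col VH \<psi> X" unfolding Phi_Rval[of _ _ _ _ VH] ps by simp
  qed
  have e: "{e \<in> EH. \<not> e \<subseteq> VH} = {}" using EH_sub by blast
  have r: "\<And>x y. reach {} x y \<longleftrightarrow> x = y" by (simp add: reach_def)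
  show "rooted VH EH VH"
    unfolding rooted_def Let_def e
  proof (intro conjI)
    show "VH \<subseteq> VH" by simp
    show "\<nexists>c. is_cycle {} c" by (simp add: is_cycle_def)
    show "\<forall>x\<in>VH. card ({y. reach {} x y} \<inter> VH) = 1"
    proof
      fix x assume "x \<in> VH"
      then have "{y. reach {} x y} \<inter> VH = {x}" by (auto simp: r)
      then show "card ({y. reach {} x y} \<inter> VH) = 1" by simp
    qed
  qed
qed

lemma iso_all:
  assumes "Inv W E \<psi>"
  shows "finite F \<Longrightarrow> F \<subseteq> VH - W \<Longrightarrow> \<exists>\<psi>'. Inv (W \<union> F) E \<psi>' \<and> (\<forall>h\<in>W. \<psi>' h = \<psi> h)"
proof (induction F rule: finite_induct)
  case empty then show ?case using assms by auto
next
  case (insert z F)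
  obtain \<psi>1 where p1: "Inv (W \<union> F) E \<psi>1" "\<forall>h\<in>W. \<psi>1 h = \<psi> h" using insert by auto
  have z: "z \<in> VH" "z \<notin> W \<union> F" using insert by auto
  obtain \<psi>2 where p2: "Inv (insert z (W \<union> F)) E \<psi>2" "\<forall>h\<in>W \<union> F. \<psi>2 h = \<psi>1 h"
    using step_iso[OF p1(1) z] by blast
  have "W \<union> insert z F = insert z (W \<union> F)" by auto
  then show ?case using p1(2) p2 by auto
qed

lemma step_any:
  assumes inv: "Inv W E \<psi>" and pth: "is_path EH p" and int: "set (butlast (tl p)) \<inter> W = {}"
    and ends: "hd p \<in> W \<or> last p \<in> W" and lp: "length p \<ge> 2*m+4"
    and sq: "s \<le> qq^m" and sq2: "qq^m \<le> qq * s"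
  shows "\<exists>\<psi>'. Inv (W \<union> set p) (E \<union> path_edges p) \<psi>' \<and> (\<forall>h\<in>W. \<psi>' h = \<psi> h)"
proof -
  have "\<exists>q. is_path EH q \<and> set (butlast (tl q)) \<inter> W = {} \<and> hd q \<in> W \<and> length q = length p \<and>
          set q = set p \<and> path_edges q = path_edges p"
  proof (cases "hd p \<in> W")
    case True then show ?thesis using pth int by blast
  next
    case False
    then have lW: "last p \<in> W" using ends by simp
    have ne: "p \<noteq> []" using lp by auto
    have ip: "is_path EH (rev p)"
    proof -
      have pe: "path_edges (rev p) \<subseteq> EH" using path_facts(1)[OF pth] by (simp add: pe_rev)
      have "\<forall>j. Suc j < length (rev p) \<longrightarrow> {rev p ! j, rev p ! Suc j} \<in> EH"
        using pe unfolding path_edges_def by blast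
      then show ?thesis using pth ne unfolding is_path_def by simp
    qed
    have tr: "tl (rev p) = rev (butlast p)"
    proof -
      have e: "butlast p @ [last p] = p" using ne by (rule append_butlast_last_id)
      have "tl (rev p) = tl (rev (butlast p @ [last p]))" by (simp only: e)
      also have "\<dots> = rev (butlast p)" by (simp only: rev_append rev.simps append.simps list.sel(3))
      finally show ?thesis .
    qed
    have "butlast (tl (rev p)) = rev (butlast (tl p))"
      unfolding tr butlast_rev butlast_tl ..
    then have "set (butlast (tl (rev p))) \<inter> W = {}" using int by simp
    moreover have "hd (rev p) \<in> W" using lW ne by (simp add: hd_rev)
    ultimately show ?thesis using ip pe_rev[of p] by (intro exI[of _ "rev p"]) simp
  qed
  then obtain q where q: "is_path EH q" "set (butlast (tl q)) \<inter> W = {}" "hd q \<in> W" "length q = length p"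
      "set q = set p" "path_edges q = path_edges p" by blast
  define u where "u = hd q"
  have qne: "q \<noteq> []" using q(4) lp by auto
  have q1: "q = u # tl q" using qne by (simp add: u_def)
  have tne: "tl q \<noteq> []" using q(4) lp by (cases q) auto
  have lq: "last (tl q) = last q" using q1 tne by (metis last_ConsR)
  have q2: "tl q = butlast (tl q) @ [last q]" using append_butlast_last_id[OF tne] lq by simp
  have res: "\<exists>\<psi>'. Inv (W \<union> set q) (E \<union> path_edges q) \<psi>' \<and> (\<forall>h\<in>W. \<psi>' h = \<psi> h)"
  proof (cases "last q \<in> W")
    case True
    define np where "np = butlast (tl q)"
    have qq': "q = u # np @ [last q]" using q1 q2 by (simp add: np_def)
    have lnp: "length np = (length np - (2*m+2)) + (2*m+2)" using q(4) lp by (simp add: np_def)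
    show ?thesis
      using step_join[OF inv q(1) qq' _ True _ lnp sq sq2] q(2,3) by (simp add: u_def np_def)
  next
    case False
    have "set (tl q) = set (butlast (tl q)) \<union> {last q}" using q2 by (metis set_append list.set(1) list.simps(15))
    then have "set (tl q) \<inter> W = {}" using q(2) False by blast
    then show ?thesis using step_free[OF inv q(1) q1] q(3) tne by (simp add: u_def)
  qed
  then show ?thesis using q(5,6) by simp
qed

end


theorem theorem2p12:
  fixes V :: "'v set" and G :: "nat \<Rightarrow> 'v \<Rightarrow> 'v \<Rightarrow> bool"
    and s t D n :: nat and L :: int
    and VH VH0 :: "'h set" and EH EH0 :: "'h set set" and col :: "'h set \<Rightarrow> nat"
    and R0 :: "'h set" and \<phi> :: "'h \<Rightarrow> 'v"
  assumes "s \<ge> 1" and "t \<ge> 1" and "D \<ge> 3"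
    and "L = 2 * \<lceil>ln (real s) / ln (real D - 1)\<rceil> + 3"
    and "graph_family V t G" and "card V = n" and "s_joined V t G s"
    and "colgraph t VH EH col" and "max_mon_deg_le t VH EH col D"
    and "int (card VH) \<le> int n - 6 * int s * int D"
    and "colgraph t VH0 EH0 col" and "colsubgraph VH0 EH0 VH EH" and "rooted VH0 EH0 R0"
    and "\<exists>Ps. path_constructible VH0 EH0 VH EH Ps \<and>
            (\<forall>p \<in> set Ps. int (length p) - 1 \<ge> L)"
    and "embedding V G VH0 EH0 col \<phi>"
    and "good V t G (2 * s) D VH0 EH0 col R0 \<phi>"
  shows "\<exists>R \<phi>'. R0 \<subseteq> R \<and> rooted VH EH R \<and> embedding V G VH EH col \<phi>' \<and>
           (\<forall>x \<in> VH0. \<phi>' x = \<phi> x) \<and> good V t G (2 * s) D VH EH col R \<phi>'"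
proof -
  interpret Lc: hL V t G s D n VH EH col
    by unfold_locales (fact assms)+
  obtain Ps where Ps: "path_constructible VH0 EH0 VH EH Ps" "\<forall>p \<in> set Ps. int (length p) - 1 \<ge> L"
    using assms(14) by blast
  have PC: "\<forall>p \<in> set Ps. is_path EH p"
    "EH = EH0 \<union> \<Union> (path_edges ` set Ps)"
    "\<forall>a < length Ps.
        set (butlast (tl (Ps ! a))) \<inter> (VH0 \<union> (\<Union>b<a. set (Ps ! b))) = {} \<and>
        (hd (Ps ! a) \<in> VH0 \<union> (\<Union>b<a. set (Ps ! b)) \<or>
         last (Ps ! a) \<in> VH0 \<union> (\<Union>b<a. set (Ps ! b)))"
  proof -
    note PA = Ps(1)[unfolded path_constructible_def]
    show "\<forall>p \<in> set Ps. is_path EH p" using conjunct1[OF PA] .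
    show "EH = EH0 \<union> \<Union> (path_edges ` set Ps)" using conjunct1[OF conjunct2[OF conjunct2[OF PA]]] .
    show "\<forall>a < length Ps.
        set (butlast (tl (Ps ! a))) \<inter> (VH0 \<union> (\<Union>b<a. set (Ps ! b))) = {} \<and>
        (hd (Ps ! a) \<in> VH0 \<union> (\<Union>b<a. set (Ps ! b)) \<or>
         last (Ps ! a) \<in> VH0 \<union> (\<Union>b<a. set (Ps ! b)))"
      using conjunct2[OF conjunct2[OF conjunct2[OF PA]]] .
  qed
  have q2: "Lc.qq \<ge> 2" by (rule Lc.qq2)
  have ex: "s \<le> Lc.qq ^ s"
  proof -
    have "s < 2 ^ s" by (rule less_exp)
    also have "(2::nat) ^ s \<le> Lc.qq ^ s" using q2 by (rule power_mono) simp
    finally show ?thesis by simp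
  qed
  define mm where "mm = (LEAST k. s \<le> Lc.qq ^ k)"
  have mmA: "s \<le> Lc.qq ^ mm" unfolding mm_def using LeastI[of "\<lambda>k. s \<le> Lc.qq ^ k" s] ex by blast
  have mmB: "Lc.qq ^ mm \<le> Lc.qq * s"
  proof (cases mm)
    case 0
    then show ?thesis using q2 assms(1) by (simp add: mult_le_mono)
  next
    case (Suc k)
    then have "k < mm" by simp
    then have "\<not> s \<le> Lc.qq ^ k" unfolding mm_def by (rule not_less_Least)
    then have "Lc.qq ^ k \<le> s" by simp
    then have "Lc.qq * Lc.qq ^ k \<le> Lc.qq * s" by (rule mult_le_mono2)
    then show ?thesis using Suc by simp
  qed
  have mmL: "2 * int mm + 3 \<le> L"
  proof -
    define c where "c = \<lceil>ln (real s) / ln (real D - 1)\<rceil>"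
    have qr: "real D - 1 = real Lc.qq" using assms(3) unfolding Lc.qq_def by (simp add: of_nat_diff)
    have lq: "ln (real Lc.qq) > 0" using q2 by simp
    have ls: "ln (real s) \<ge> 0" using assms(1) by simp
    have r0: "0 \<le> ln (real s) / ln (real Lc.qq)" using ls lq by (rule divide_nonneg_pos)
    have c0: "c \<ge> 0" unfolding c_def qr using r0 by linarith
    have "ln (real s) / ln (real Lc.qq) \<le> real_of_int c" unfolding c_def qr by (rule le_of_int_ceiling)
    also have "real_of_int c = real (nat c)" using c0 by simp
    finally have "ln (real s) \<le> real (nat c) * ln (real Lc.qq)" using lq by (simp add: pos_divide_le_eq)
    also have "\<dots> = ln (real Lc.qq ^ nat c)" using q2 by (simp add: ln_realpow)
    finally have "ln (real s) \<le> ln (real Lc.qq ^ nat c)" .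
    then have "real s \<le> real Lc.qq ^ nat c" using assms(1) q2 by (subst (asm) ln_le_cancel_iff) auto
    then have "s \<le> Lc.qq ^ nat c" by (metis of_nat_le_iff of_nat_power)
    then have "mm \<le> nat c" unfolding mm_def by (rule Least_le)
    then have "int mm \<le> c" using c0 by linarith
    then show ?thesis using assms(4) unfolding c_def by linarith
  qed
  have lenP: "\<forall>p\<in>set Ps. length p \<ge> 2 * mm + 4" using Ps(2) mmL by force
  define Wk where "Wk = (\<lambda>k. VH0 \<union> (\<Union>b<k. set (Ps ! b)))"
  define Ek where "Ek = (\<lambda>k. EH0 \<union> (\<Union>b<k. path_edges (Ps ! b)))"
  have main: "k \<le> length Ps \<Longrightarrow> \<exists>\<psi>. Lc.Inv (Wk k) (Ek k) \<psi> \<and> (\<forall>x\<in>VH0. \<psi> x = \<phi> x)" for k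
  proof (induction k)
    case 0
    have "Lc.Inv VH0 EH0 \<phi>" using Lc.Inv_init[OF assms(11,12,15,16)] .
    then show ?case by (intro exI[of _ \<phi>]) (simp add: Wk_def Ek_def)
  next
    case (Suc k)
    then have k: "k < length Ps" by simp
    obtain \<psi> where \<psi>: "Lc.Inv (Wk k) (Ek k) \<psi>" "\<forall>x\<in>VH0. \<psi> x = \<phi> x" using Suc by auto
    define p where "p = Ps ! k"
    have pin: "p \<in> set Ps" using k by (simp add: p_def)
    have pth: "is_path EH p" using PC(1) pin by simp
    have int: "set (butlast (tl p)) \<inter> Wk k = {}" and ends: "hd p \<in> Wk k \<or> last p \<in> Wk k"
      using PC(3) k by (simp_all add: p_def Wk_def)
    have lp: "length p \<ge> 2 * mm + 4" using lenP pin by simp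
    obtain \<psi>' where \<psi>': "Lc.Inv (Wk k \<union> set p) (Ek k \<union> path_edges p) \<psi>'" "\<forall>h\<in>Wk k. \<psi>' h = \<psi> h"
      using Lc.step_any[OF \<psi>(1) pth int ends lp mmA mmB] by blast
    have "Wk k \<union> set p = Wk (Suc k)" "Ek k \<union> path_edges p = Ek (Suc k)"
      by (auto simp: Wk_def Ek_def p_def lessThan_Suc)
    moreover have "\<forall>x\<in>VH0. \<psi>' x = \<phi> x" using \<psi>(2) \<psi>'(2) by (simp add: Wk_def)
    ultimately show ?case using \<psi>'(1) by auto
  qed
  obtain \<psi> where \<psi>: "Lc.Inv (Wk (length Ps)) (Ek (length Ps)) \<psi>" "\<forall>x\<in>VH0. \<psi> x = \<phi> x"
    using main by blast
  have EE: "Ek (length Ps) = EH"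
  proof -
    have "(\<Union>b<length Ps. path_edges (Ps ! b)) = \<Union> (path_edges ` set Ps)"
    proof
      show "(\<Union>b<length Ps. path_edges (Ps ! b)) \<subseteq> \<Union> (path_edges ` set Ps)"
        using nth_mem by blast
      show "\<Union> (path_edges ` set Ps) \<subseteq> (\<Union>b<length Ps. path_edges (Ps ! b))"
        by (auto simp: in_set_conv_nth)
    qed
    then show ?thesis using PC(2) by (simp add: Ek_def)
  qed
  have WV: "Wk (length Ps) \<subseteq> VH" using \<psi>(1) unfolding Lc.Inv_def by simp
  obtain \<psi>2 where \<psi>2: "Lc.Inv (Wk (length Ps) \<union> (VH - Wk (length Ps))) EH \<psi>2"
      "\<forall>h\<in>Wk (length Ps). \<psi>2 h = \<psi> h"
    using Lc.iso_all[OF \<psi>(1)[unfolded EE], of "VH - Wk (length Ps)"] Lc.finVH by blast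
  have "Wk (length Ps) \<union> (VH - Wk (length Ps)) = VH" using WV by blast
  then have inv: "Lc.Inv VH EH \<psi>2" using \<psi>2(1) by simp
  have ag: "\<forall>x\<in>VH0. \<psi>2 x = \<phi> x" using \<psi>2(2) \<psi>(2) by (simp add: Wk_def)
  have R0: "R0 \<subseteq> VH"
  proof -
    have "R0 \<subseteq> VH0" using assms(13) unfolding rooted_def by simp
    moreover have "VH0 \<subseteq> VH" using assms(12) unfolding colsubgraph_def by simp
    ultimately show ?thesis by blast
  qed
  show ?thesis
    using R0 Lc.Inv_final[OF inv] ag by blast
qed


end
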